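(* Let $p$ be a prime, $q$ a power of $p$, $n\ge1$ odd, $m=\frac{q^n+1}{q+1}$, and let $G\le B(Q_\infty)$ be a subgroup. Then, up to replacing $G$ by a conjugate subgroup in $B(Q_\infty)$, the associated data $G_0,G_2,G_3$ satisfy: (i) $G_0$ is a cyclic subgroup of $\mu$, the group of $m(q^2-1)$-th roots of unity in $\mathbb{F}_{q^{2n}}^*$; (ii) $G_2\subset\mathbb{F}_{q^2}$ is a vector space over $\mathbb{F}_p(G_0^m)$; (iii) $G_3\subset\{c\in\mathbb{F}_{q^2}\mid c^q+c=0\}$ is a vector space over $\mathbb{F}_p(G_0^{q^n+1})$ containing $W$, where $W=\{b_1b_2^q-b_2b_1^q\mid b_1,b_2\in G_2\}$ if $p$ is odd and $W=\{b^{q+1}\mid b\in G_2\}$ if $p=2$. Conversely, for any $G_0,G_2,G_3$ satisfying (i), (ii) and (iii) there exists a subgroup $G\le B(Q_\infty)$ giving rise to this triple.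
   Context: Let $\mathcal C_n=\mathbb{F}_{q^{2n}}(x,y,z)$ be the function field defined by $x^q+x=y^{q+1}$ and $z^m=y^{q^2}-y$. Let $A(P_\infty)$ be the group of symbols $[a,b,c]$ with $a\in\mathbb{F}_{q^2}^*$, $b,c\in\mathbb{F}_{q^2}$, $c^q+c=b^{q+1}$, group law $[a',b',c']\circ[a,b,c]=[a'a,ab'+b,a^{q+1}c'+ab^qb'+c]$. Let $B(Q_\infty)$ be the group of automorphisms $[a,b,c,d]$ of $\mathcal C_n$ given by $x\mapsto a^{q+1}x+ab^qy+c$, $y\mapsto ay+b$, $z\mapsto dz$, where $a\in\mathbb{F}_{q^2}^*$, $b,c\in\mathbb{F}_{q^2}$, $c^q+c=b^{q+1}$, $d\in\mathbb{F}_{q^{2n}}$, $d^m=a$, with group law $[a',b',c',d']\circ[a,b,c,d]=[a'a,ab'+b,a^{q+1}c'+ab^qb'+c,d'd]$. Let $\pi([a,b,c,d])=[a,b,c]$ and $\pi_d([a,b,c,d])=d$. For a subgroup $G$: $G_0=\pi_d(G)$; $U=\{[1,b,c]\in\pi(G)\}$; $G_2=\{b:[1,b,c]\in U\}$ (image of $\psi:U\to\mathbb{F}_{q^2}$, $[1,b,c]\mapsto b$); $G_3=\{c:[1,0,c]\in\pi(G)\}$ (the kernel of $\psi$, identified with a subset of $\mathbb{F}_{q^2}$). For $S\subset\mathbb{F}_{q^{2n}}$ and integer $i$, $S^i=\{s^i:s\in S\}$ and $\mathbb{F}_p(S)$ denotes the field generated over $\mathbb{F}_p$ by $S$. *)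

theory Defs
  imports "HOL-Algebra.Group" "HOL-Computational_Algebra.Primes"
begin

text \<open>The ambient field F_{q^{2n}} is a finite field type 'k with CARD('k) = q^(2n).
  F_{q^2} is realised as the set of fixed points of x \<mapsto> x^(q^2).\<close>

definition Fq2 :: "nat \<Rightarrow> 'k::{field,finite} set" where
  "Fq2 q = {x. x ^ (q^2) = x}"

definition mm :: "nat \<Rightarrow> nat \<Rightarrow> nat" where
  "mm q n = (q ^ n + 1) div (q + 1)"

text \<open>Elements [a,b,c,d] of B(Q_infinity) are represented as tuples (a,b,c,d).\<close>

definition Bset :: "nat \<Rightarrow> nat \<Rightarrow> ('k::{field,finite} \<times> 'k \<times> 'k \<times> 'k) set" where
  "Bset q n = {(a,b,c,d). a \<in> Fq2 q \<and> a \<noteq> 0 \<and> b \<in> Fq2 q \<and> c \<in> Fq2 q \<and>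
                 c ^ q + c = b ^ (q+1) \<and> d ^ mm q n = a}"

definition Bmult :: "nat \<Rightarrow> ('k::{field,finite} \<times> 'k \<times> 'k \<times> 'k) \<Rightarrow> ('k \<times> 'k \<times> 'k \<times> 'k)
    \<Rightarrow> ('k \<times> 'k \<times> 'k \<times> 'k)" where
  "Bmult q g' g = (case g' of (a',b',c',d') \<Rightarrow> case g of (a,b,c,d) \<Rightarrow>
      (a' * a, a * b' + b, a ^ (q+1) * c' + a * b ^ q * b' + c, d' * d))"

definition Bgrp :: "nat \<Rightarrow> nat \<Rightarrow> ('k::{field,finite} \<times> 'k \<times> 'k \<times> 'k) monoid" where
  "Bgrp q n = \<lparr>carrier = Bset q n, monoid.mult = Bmult q, one = (1, 0, 0, 1)\<rparr>"

definition conjB :: "nat \<Rightarrow> nat \<Rightarrow> ('k::{field,finite} \<times> 'k \<times> 'k \<times> 'k)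
    \<Rightarrow> ('k \<times> 'k \<times> 'k \<times> 'k) set \<Rightarrow> ('k \<times> 'k \<times> 'k \<times> 'k) set" where
  "conjB q n h G = (\<lambda>g. h \<otimes>\<^bsub>Bgrp q n\<^esub> g \<otimes>\<^bsub>Bgrp q n\<^esub> inv\<^bsub>Bgrp q n\<^esub> h) ` G"

definition G0of :: "('k \<times> 'k \<times> 'k \<times> 'k) set \<Rightarrow> 'k set" where
  "G0of G = {d. \<exists>a b c. (a,b,c,d) \<in> G}"

definition G2of :: "('k::one \<times> 'k \<times> 'k \<times> 'k) set \<Rightarrow> 'k set" where
  "G2of G = {b. \<exists>c d. (1,b,c,d) \<in> G}"

definition G3of :: "('k::{one,zero} \<times> 'k \<times> 'k \<times> 'k) set \<Rightarrow> 'k set" where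
  "G3of G = {c. \<exists>d. (1,0,c,d) \<in> G}"

text \<open>Subfields of the ambient field, and F_p(S) = subfield generated by S
  (intersection of all subfields containing S; every subfield contains F_p).\<close>
definition is_subfield_set :: "'k::field set \<Rightarrow> bool" where
  "is_subfield_set F \<longleftrightarrow> 0 \<in> F \<and> 1 \<in> F \<and> (\<forall>x\<in>F. \<forall>y\<in>F. x + y \<in> F \<and> x * y \<in> F) \<and>
     (\<forall>x\<in>F. - x \<in> F) \<and> (\<forall>x\<in>F. x \<noteq> 0 \<longrightarrow> inverse x \<in> F)"

definition gen_field :: "'k::field set \<Rightarrow> 'k set" where
  "gen_field S = \<Inter> {F. is_subfield_set F \<and> S \<subseteq> F}"

definition is_vs_over :: "'k::field set \<Rightarrow> 'k set \<Rightarrow> bool" where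
  "is_vs_over F V \<longleftrightarrow> 0 \<in> V \<and> (\<forall>x\<in>V. \<forall>y\<in>V. x + y \<in> V) \<and> (\<forall>x\<in>V. - x \<in> V) \<and>
     (\<forall>a\<in>F. \<forall>x\<in>V. a * x \<in> V)"

definition Wset :: "nat \<Rightarrow> nat \<Rightarrow> 'k::field set \<Rightarrow> 'k set" where
  "Wset p q G2 = (if p = 2 then {b ^ (q+1) | b. b \<in> G2}
                  else {b1 * b2 ^ q - b2 * b1 ^ q | b1 b2. b1 \<in> G2 \<and> b2 \<in> G2})"

definition triple_ok :: "nat \<Rightarrow> nat \<Rightarrow> nat \<Rightarrow> 'k::{field,finite} set \<Rightarrow> 'k set \<Rightarrow> 'k set \<Rightarrow> bool" where
  "triple_ok p q n G0 G2 G3 \<longleftrightarrow>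
     (\<exists>g::'k. g ^ (mm q n * (q^2 - 1)) = 1 \<and> G0 = range (\<lambda>k::nat. g ^ k)) \<and>
     G2 \<subseteq> Fq2 q \<and> is_vs_over (gen_field ((\<lambda>x. x ^ mm q n) ` G0)) G2 \<and>
     G3 \<subseteq> {c \<in> Fq2 q. c ^ q + c = 0} \<and>
     is_vs_over (gen_field ((\<lambda>x. x ^ (q^n + 1)) ` G0)) G3 \<and>
     Wset p q G2 \<subseteq> G3"

end

theory Submission imports Defs "HOL-Number_Theory.Residues" begin

definition Rk :: "'a::field ring" where
  "Rk = \<lparr>carrier = UNIV, monoid.mult = (\<lambda>x y. x * y), one = 1, ring.zero = 0, add = (\<lambda>x y. x + y)\<rparr>"

lemma field_Rk: "field (Rk :: 'a::field ring)"
proof -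
  have "\<exists>y. x + y = 0" for x :: 'a
    using add.right_inverse by blast
  moreover have "x \<noteq> 0 \<Longrightarrow> \<exists>y. x * y = 1" for x :: 'a
    by (rule exI[of _ "inverse x"]) auto
  ultimately show ?thesis
    unfolding Rk_def using add.right_inverse
    by unfold_locales (auto simp:algebra_simps Units_def)
qed

lemma Rk_pow: "a [^]\<^bsub>Rk\<^esub> (i::nat) = (a::'a::field) ^ i"
  by (induction i) (simp_all add: Rk_def nat_pow_def)

lemma gen_ex: "\<exists>g::'a::{field,finite}. g \<noteq> 0 \<and> (\<forall>x. x \<noteq> 0 \<longrightarrow> (\<exists>i. x = g ^ i))"
proof -
  interpret field "Rk :: 'a ring" by (rule field_Rk)
  have "finite (carrier (Rk :: 'a ring))" by simp
  from finite_field_mult_group_has_gen[OF this] obtain a :: 'a where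
    a: "a \<in> carrier (mult_of Rk)" "carrier (mult_of Rk) = {a [^]\<^bsub>Rk\<^esub> i |i. i \<in> (UNIV::nat set)}"
    by blast
  have c: "carrier (mult_of (Rk :: 'a ring)) = UNIV - {0}" by (simp add: Rk_def)
  show ?thesis
  proof (intro exI[of _ a] conjI allI impI)
    show "a \<noteq> 0" using a(1) c by auto
    fix x :: 'a assume "x \<noteq> 0"
    hence "x \<in> carrier (mult_of Rk)" using c by auto
    thus "\<exists>i. x = a ^ i" using a(2) by (auto simp: Rk_pow)
  qed
qed

lemma pow_card_same: "(x::'a::{field,finite}) ^ card (UNIV :: 'a set) = x"
proof (cases "x = 0")
  case False
  have "x * (\<Prod>y\<in>UNIV-{0}. x * y) = x * x ^ (card (UNIV :: 'a set) - 1) * \<Prod>(UNIV-{0})"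
    by (simp add: prod.distrib mult_ac)
  also have "x * x ^ (card (UNIV :: 'a set) - 1) = x ^ Suc (card (UNIV :: 'a set) - 1)"
    by (subst power_Suc) auto
  also have "Suc (card (UNIV :: 'a set) - 1) = card (UNIV :: 'a set)"
    using finite_UNIV_card_ge_0[where ?'a = 'a] by simp
  also have "(\<Prod>y\<in>UNIV-{0}. x * y) = (\<Prod>y\<in>UNIV-{0}. y)"
    by (rule prod.reindex_bij_witness[of _ "\<lambda>y. y / x" "\<lambda>y. x * y"]) (use False in auto)
  finally show ?thesis
    by simp
qed (use finite_UNIV_card_ge_0[where ?'a = 'a] in auto)

lemma pow_mod_one: "(g::'a::comm_monoid_mult) ^ i = 1 \<Longrightarrow> g ^ j = g ^ (j mod i)"
proof -
  assume "g ^ i = 1"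
  have "g ^ j = g ^ (i * (j div i) + j mod i)" by simp
  also have "\<dots> = (g ^ i) ^ (j div i) * g ^ (j mod i)" by (simp only: power_add power_mult)
  finally show ?thesis using \<open>g ^ i = 1\<close> by simp
qed

lemma inverse_is_pow: "(x::'a::{field,finite}) \<noteq> 0 \<Longrightarrow> \<exists>k. inverse x = x ^ k"
proof -
  assume x0: "x \<noteq> 0"
  have c2: "card (UNIV :: 'a set) \<ge> 2"
  proof -
    have "{0,1::'a} \<subseteq> UNIV" by simp
    hence "card {0,1::'a} \<le> card (UNIV :: 'a set)" by (intro card_mono) auto
    thus ?thesis by simp
  qed
  have "x ^ (card (UNIV :: 'a set) - 2) * x = x ^ card (UNIV :: 'a set) * inverse x"
  proof -
    have "card (UNIV :: 'a set) = Suc (Suc (card (UNIV :: 'a set) - 2))" using c2 by simp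
    hence "x ^ card (UNIV :: 'a set) = x ^ (card (UNIV :: 'a set) - 2) * x * x"
      by (metis power_Suc2)
    thus ?thesis using x0 by simp
  qed
  hence "x ^ (card (UNIV :: 'a set) - 2) * x = 1" using pow_card_same[of x] x0 by simp
  hence "inverse x = x ^ (card (UNIV :: 'a set) - 2)" using x0 by (simp add: field_simps)
  thus ?thesis by blast
qed

lemma gen_field_sub: "is_subfield_set (gen_field S)"
  unfolding gen_field_def is_subfield_set_def by auto

lemma gen_field_ge: "S \<subseteq> gen_field S"
  unfolding gen_field_def by auto

lemma vs_gen:
  fixes V S :: "'a::{field,finite} set"
  assumes "0 \<in> V" "\<And>x y. x \<in> V \<Longrightarrow> y \<in> V \<Longrightarrow> x + y \<in> V" "\<And>x. x \<in> V \<Longrightarrow> - x \<in> V"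
    "\<And>s x. s \<in> S \<Longrightarrow> x \<in> V \<Longrightarrow> s * x \<in> V"
  shows "is_vs_over (gen_field S) V"
proof -
  define M where "M = {l. \<forall>x\<in>V. l * x \<in> V}"
  have pw: "l ^ k \<in> M" if "l \<in> M" for l k
    using that by (induction k) (auto simp: M_def mult.assoc)
  have "is_subfield_set M"
    unfolding is_subfield_set_def
  proof (intro conjI ballI impI)
    show "0 \<in> M" "1 \<in> M" using assms(1) by (auto simp: M_def)
    fix x y assume "x \<in> M" "y \<in> M"
    thus "x + y \<in> M" "x * y \<in> M" using assms(2) by (auto simp: M_def distrib_right mult.assoc)
  next
    fix x assume "x \<in> M"
    thus "- x \<in> M" using assms(3) by (auto simp: M_def)
  next
    fix x assume "x \<in> M" "x \<noteq> 0"
    then obtain k where "inverse x = x ^ k" using inverse_is_pow by blast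
    thus "inverse x \<in> M" using pw[OF \<open>x \<in> M\<close>] by simp
  qed
  moreover have "S \<subseteq> M" using assms(4) by (auto simp: M_def)
  ultimately have "gen_field S \<subseteq> M" unfolding gen_field_def by blast
  thus ?thesis using assms unfolding is_vs_over_def M_def by blast
qed

lemma vs_facts:
  assumes "is_vs_over F V"
  shows "0 \<in> V" "\<And>x y. x \<in> V \<Longrightarrow> y \<in> V \<Longrightarrow> x + y \<in> V" "\<And>x. x \<in> V \<Longrightarrow> - x \<in> V"
    "\<And>a x. a \<in> F \<Longrightarrow> x \<in> V \<Longrightarrow> a * x \<in> V"
    "\<And>x y. x \<in> V \<Longrightarrow> y \<in> V \<Longrightarrow> x - y \<in> V"
proof -
  show "0 \<in> V" "\<And>x y. x \<in> V \<Longrightarrow> y \<in> V \<Longrightarrow> x + y \<in> V" "\<And>x. x \<in> V \<Longrightarrow> - x \<in> V"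
    "\<And>a x. a \<in> F \<Longrightarrow> x \<in> V \<Longrightarrow> a * x \<in> V"
    using assms unfolding is_vs_over_def by auto
  fix x y assume "x \<in> V" "y \<in> V"
  thus "x - y \<in> V" unfolding diff_conv_add_uminus using assms unfolding is_vs_over_def by blast
qed

lemma vs_sum:
  assumes "is_vs_over F V" "\<And>i. i \<in> I \<Longrightarrow> h i \<in> V"
  shows "sum h I \<in> V"
  using assms(2)
proof (induction I rule: infinite_finite_induct)
  case (infinite A) thus ?case using vs_facts(1)[OF assms(1)] by simp
next
  case empty thus ?case using vs_facts(1)[OF assms(1)] by simp
next
  case (insert x F) thus ?case using vs_facts(2)[OF assms(1)] by simp
qed

locale S3 =
  fixes p q n e :: nat
  assumes prime_p: "prime p" and e1: "e \<ge> 1" and qdef: "q = p ^ e" and oddn: "odd n"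
    and cardk: "card (UNIV :: 'k::{field,finite} set) = q ^ (2 * n)"
begin

lemma CHAR_k: "CHAR('k) = p"
proof -
  have pos: "CHAR('k) > 0" by (rule finite_imp_CHAR_pos) simp
  have pr: "prime CHAR('k)" using prime_CHAR_semidom[OF pos] .
  have "CHAR('k) dvd p ^ (e * (2*n))" using CHAR_dvd_CARD[where 'a='k] cardk qdef
    by (simp add: power_mult)
  hence "CHAR('k) dvd p" using pr prime_dvd_power by blast
  thus ?thesis using pr prime_p by (simp add: primes_dvd_imp_eq)
qed

lemma p0: "(of_nat p :: 'k) = 0"
  using CHAR_k of_nat_CHAR[where 'a='k] by simp

lemma q2: "q \<ge> 2"
proof -
  have "p \<ge> 2" using prime_p prime_ge_2_nat by blast
  hence "p ^ 1 \<le> p ^ e" using e1 by (intro power_increasing) auto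
  thus ?thesis using qdef \<open>p \<ge> 2\<close> by simp
qed

lemma frob_add: "((x::'k) + y) ^ q = x ^ q + y ^ q"
  by (rule freshmans_dream') (auto simp: CHAR_k prime_p qdef)

lemma frob_zero: "(0::'k) ^ q = 0" using q2 by simp

lemma frob_neg: "(- (x::'k)) ^ q = - (x ^ q)"
proof -
  have "(x + - x) ^ q = 0" using q2 by simp
  hence "x ^ q + (-x) ^ q = 0" using frob_add by metis
  thus ?thesis by (simp add: eq_neg_iff_add_eq_0 add.commute)
qed

lemma frob_diff: "((x::'k) - y) ^ q = x ^ q - y ^ q"
  using frob_add[of x "-y"] frob_neg[of y] by simp

lemma frob_sum: "(sum (f :: 'a \<Rightarrow> 'k) A) ^ q = sum (\<lambda>i. f i ^ q) A"
  by (induction A rule: infinite_finite_induct) (auto simp: frob_add frob_zero)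

lemma frob2_add: "((x::'k) + y) ^ (q^2) = x ^ (q^2) + y ^ (q^2)"
  by (simp add: power2_eq_square power_mult frob_add)

lemma frob2_neg: "(- (x::'k)) ^ (q^2) = - (x ^ (q^2))"
  by (simp add: power2_eq_square power_mult frob_neg)

lemma two_q: "(2::'k) ^ q = 2"
  using frob_add[of 1 1] by (simp add: one_add_one)

lemma of_nat_q: "(of_nat k::'k) ^ q = of_nat k"
  by (induction k) (auto simp: frob_add frob_zero)

lemma Fq2_iff: "x \<in> Fq2 q \<longleftrightarrow> x ^ (q^2) = x" by (simp add: Fq2_def)

lemma Fq2_0: "(0::'k) \<in> Fq2 q" and Fq2_1: "(1::'k) \<in> Fq2 q"
  using q2 by (auto simp: Fq2_def)

lemma Fq2_add: "(x::'k) \<in> Fq2 q \<Longrightarrow> y \<in> Fq2 q \<Longrightarrow> x + y \<in> Fq2 q"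
  unfolding Fq2_def using frob2_add by auto

lemma Fq2_mult: "(x::'k) \<in> Fq2 q \<Longrightarrow> y \<in> Fq2 q \<Longrightarrow> x * y \<in> Fq2 q"
  by (simp add: Fq2_def power_mult_distrib)

lemma Fq2_neg: "(x::'k) \<in> Fq2 q \<Longrightarrow> - x \<in> Fq2 q"
  unfolding Fq2_def using frob2_neg by auto

lemma Fq2_diff: "(x::'k) \<in> Fq2 q \<Longrightarrow> y \<in> Fq2 q \<Longrightarrow> x - y \<in> Fq2 q"
  unfolding diff_conv_add_uminus by (intro Fq2_add Fq2_neg)

lemma Fq2_inv: "(x::'k) \<in> Fq2 q \<Longrightarrow> inverse x \<in> Fq2 q"
  by (simp add: Fq2_def power_inverse)

lemma Fq2_div: "(x::'k) \<in> Fq2 q \<Longrightarrow> y \<in> Fq2 q \<Longrightarrow> x / y \<in> Fq2 q"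
  by (simp add: divide_inverse Fq2_mult Fq2_inv)

lemma Fq2_pow: "(x::'k) \<in> Fq2 q \<Longrightarrow> x ^ k \<in> Fq2 q"
  by (induction k) (auto simp: Fq2_1 Fq2_mult)

lemma Fq2_qq: "(x::'k) \<in> Fq2 q \<Longrightarrow> (x ^ q) ^ q = x"
  by (simp add: Fq2_def power2_eq_square power_mult)

lemma Fq2_norm: "(x::'k) \<in> Fq2 q \<Longrightarrow> (x ^ (q+1)) ^ q = x ^ (q+1)"
  by (simp add: Fq2_qq power_mult_distrib)

lemma Fq2_sum: "(\<And>i. i \<in> A \<Longrightarrow> (f i::'k) \<in> Fq2 q) \<Longrightarrow> sum f A \<in> Fq2 q"
  by (induction A rule: infinite_finite_induct) (auto simp: Fq2_0 Fq2_add)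

lemma m_eq: "mm q n * (q + 1) = q ^ n + 1"
proof -
  have "[int q = -1] (mod int (q+1))" by (simp add: cong_iff_dvd_diff add.commute)
  hence "[int q ^ n = (-1) ^ n] (mod int (q+1))" by (rule cong_pow)
  hence "[int q ^ n = -1] (mod int (q+1))" using oddn by simp
  hence "int (q+1) dvd int q ^ n + 1" by (simp add: cong_iff_dvd_diff)
  hence "(q+1) dvd q ^ n + 1"
    using int_dvd_int_iff[of "q+1" "q^n+1"] by (simp add: add.commute)
  then obtain k where k: "q ^ n + 1 = (q + 1) * k" by (elim dvdE)
  have "(q + 1) * k div (q + 1) = k" by (rule nonzero_mult_div_cancel_left) simp
  hence "mm q n = k" unfolding mm_def k .
  hence "mm q n * (q + 1) = (q + 1) * k" by simp
  also have "\<dots> = q ^ n + 1" using k by simp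
  finally show ?thesis .
qed

lemma m_pos: "mm q n \<ge> 1"
proof (rule ccontr)
  assume "\<not> mm q n \<ge> 1"
  hence "mm q n = 0" by simp
  hence "mm q n * (q + 1) = 0" by simp
  thus False unfolding m_eq by simp
qed


lemma Bset_mem: "((a::'k),b,c,d) \<in> Bset q n \<longleftrightarrow> a \<in> Fq2 q \<and> a \<noteq> 0 \<and> b \<in> Fq2 q \<and> c \<in> Fq2 q \<and>
   c ^ q + c = b ^ (q+1) \<and> d ^ mm q n = a"
  by (simp add: Bset_def)

lemma Bmult_simp: "Bmult q (a',b',c',d') (a,b,c,d) =
   (a' * a, a * b' + b, a ^ (q+1) * c' + a * b ^ q * b' + c, d' * (d::'k))"
  by (simp add: Bmult_def)

lemma Bgrp_simps: "carrier (Bgrp q n) = Bset q n" "monoid.mult (Bgrp q n) = Bmult q"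
   "\<one>\<^bsub>Bgrp q n\<^esub> = ((1::'k),0,0,1)"
  by (simp_all add: Bgrp_def)

lemma pq1: "(x::'a::comm_ring_1) ^ (q+1) = x ^ q * x" by simp

lemma id_closed:
  fixes a aq b bq b' b'q c cq c' c'q :: "'a::comm_ring_1"
  assumes "c'q + c' = b'q*b'" "cq + c = bq*b"
  shows "(a*aq*c'q + aq*b*b'q + cq) + (a*aq*c' + a*bq*b' + c) = (aq*b'q + bq)*(a*b'+b)"
proof -
  have "(a*aq*c'q + aq*b*b'q + cq) + (a*aq*c' + a*bq*b' + c)
     = a*aq*(c'q + c') + aq*b*b'q + a*bq*b' + (cq + c)" by (simp add: algebra_simps)
  also have "\<dots> = a*aq*(b'q*b') + aq*b*b'q + a*bq*b' + bq*b" using assms by simp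
  finally show ?thesis by (simp add: algebra_simps)
qed

lemma Bmult_closed:
  assumes "x \<in> Bset q n" "y \<in> Bset q n"
  shows "Bmult q x y \<in> (Bset q n :: ('k \<times> 'k \<times> 'k \<times> 'k) set)"
proof -
  obtain a' b' c' d' where x: "x = (a',b',c',d')" by (cases x) auto
  obtain a b c d where y: "y = (a,b,c,d)" by (cases y) auto
  have X: "a' \<in> Fq2 q" "a' \<noteq> 0" "b' \<in> Fq2 q" "c' \<in> Fq2 q" "c'^q + c' = b'^(q+1)" "d'^mm q n = a'"
    using assms(1) x by (auto simp: Bset_mem)
  have Y: "a \<in> Fq2 q" "a \<noteq> 0" "b \<in> Fq2 q" "c \<in> Fq2 q" "c^q + c = b^(q+1)" "d^mm q n = a"
    using assms(2) y by (auto simp: Bset_mem)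
  define C where "C = a ^ (q+1) * c' + a * b ^ q * b' + c"
  have Cq: "C ^ q = a * a^q * c'^q + a^q * b * b'^q + c^q"
    unfolding C_def frob_add power_mult_distrib using Fq2_qq[OF Y(3)] Fq2_qq[OF Y(1)] by (simp add: algebra_simps)
  have "C ^ q + C = (a^q*b'^q + b^q)*(a*b'+b)"
    unfolding Cq using id_closed[of "c'^q" c' "b'^q" b' "c^q" c "b^q" b a "a^q"] X(5) Y(5)
    unfolding C_def by (simp add: algebra_simps)
  also have "\<dots> = (a*b'+b)^(q+1)" by (simp add: frob_add power_mult_distrib)
  finally have eq: "C ^ q + C = (a*b'+b)^(q+1)" .
  have "C \<in> Fq2 q" unfolding C_def
    using X Y by (intro Fq2_add Fq2_mult Fq2_pow) auto
  moreover have "a' * a \<in> Fq2 q" "a' * a \<noteq> 0" "a * b' + b \<in> Fq2 q" "(d' * d) ^ mm q n = a' * a"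
    using X Y by (auto intro: Fq2_add Fq2_mult simp: power_mult_distrib)
  ultimately show ?thesis using eq unfolding x y Bmult_simp Bset_mem C_def by auto
qed

lemma id_assoc:
  fixes a2 a2q a3 a3q b1 b2 b3 b2q b3q c1 c2 c3 :: "'a::comm_ring_1"
  shows "a3*a3q*(a2*a2q*c1 + a2*b2q*b1 + c2) + a3*b3q*(a2*b1+b2) + c3
    = (a2*a3)*(a2q*a3q)*c1 + a2*a3*(a3q*b2q + b3q)*b1 + a3*a3q*c2 + a3*b3q*b2 + c3"
  by (simp add: algebra_simps)

lemma Bmult_assoc: "Bmult q (Bmult q x y) z = Bmult q x (Bmult q y (z::'k\<times>'k\<times>'k\<times>'k))"
proof -
  obtain a1 b1 c1 d1 where x: "x = (a1,b1,c1,d1)" by (cases x) auto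
  obtain a2 b2 c2 d2 where y: "y = (a2,b2,c2,d2)" by (cases y) auto
  obtain a3 b3 c3 d3 where z: "z = (a3,b3,c3,d3)" by (cases z) auto
  have "(a3 * (a2 * b1 + b2) + b3) = a2 * a3 * b1 + (a3 * b2 + b3)" by (simp add: algebra_simps)
  moreover have "a3 ^ (q + 1) * (a2 ^ (q + 1) * c1 + a2 * b2 ^ q * b1 + c2) + a3 * b3 ^ q * (a2 * b1 + b2) + c3
     = (a2 * a3) ^ (q + 1) * c1 + a2 * a3 * (a3 * b2 + b3) ^ q * b1 + (a3 ^ (q + 1) * c2 + a3 * b3 ^ q * b2 + c3)"
    using id_assoc[where a3q="a3^q" and a2q="a2^q" and b2q="b2^q" and b3q="b3^q"]
    by (simp add: frob_add power_mult_distrib algebra_simps)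
  ultimately show ?thesis unfolding x y z Bmult_simp by (simp add: algebra_simps)
qed

lemma Bone_in: "((1::'k),0,0,1) \<in> Bset q n"
  using q2 by (simp add: Bset_mem Fq2_0 Fq2_1)

lemma id_inv:
  fixes a aq b bq c cq :: "'a::field"
  assumes "a \<noteq> 0" "aq \<noteq> 0" "cq + c = bq * b"
  shows "(bq*b - cq)/(aq*a) + (bq*b - c)/(aq*a) = (-bq/aq)*(-b/a)"
proof -
  have cq: "cq = bq*b - c" using assms(3) by (simp add: algebra_simps)
  have "(bq*b - cq)/(aq*a) + (bq*b - c)/(aq*a) = ((bq*b - cq) + (bq*b - c))/(aq*a)"
    by (rule add_divide_distrib[symmetric])
  also have "\<dots> = (bq*b)/(aq*a)" unfolding cq by simp
  also have "\<dots> = (-bq/aq)*(-b/a)" by simp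
  finally show ?thesis .
qed

lemma Binv_ex:
  assumes "x \<in> Bset q n"
  shows "\<exists>y \<in> (Bset q n :: ('k \<times> 'k \<times> 'k \<times> 'k) set). Bmult q y x = (1,0,0,1)"
proof -
  obtain a b c d where x: "x = (a,b,c,d)" by (cases x) auto
  have X: "a \<in> Fq2 q" "a \<noteq> 0" "b \<in> Fq2 q" "c \<in> Fq2 q" "c^q + c = b^(q+1)" "d^mm q n = a"
    using assms x by (auto simp: Bset_mem)
  have d0: "d \<noteq> 0" using X(2,6) m_pos by (cases "d = 0") auto
  define cy where "cy = (b^(q+1) - c) / a^(q+1)"
  have aq0: "a^q \<noteq> 0" using X(2) by simp
  have cyq: "cy ^ q = (b^q*b - c^q) / (a^q * a)"
    unfolding cy_def power_divide frob_diff using Fq2_norm[OF X(1)] Fq2_norm[OF X(3)]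
    by (simp add: pq1 mult.commute)
  have "cy ^ q + cy = (- (b^q) / (a^q)) * (- b / a)"
    unfolding cyq using id_inv[OF X(2) aq0, of "c^q" c "b^q" b] X(5) by (simp add: cy_def pq1 mult.commute)
  also have "\<dots> = (- b / a) ^ (q+1)" by (simp add: pq1 frob_neg power_divide mult.commute)
  finally have eq: "cy ^ q + cy = (- b / a) ^ (q+1)" .
  have cyF: "cy \<in> Fq2 q" unfolding cy_def using X by (intro Fq2_div Fq2_diff Fq2_pow) auto
  have mem: "(inverse a, - b / a, cy, inverse d) \<in> Bset q n"
    unfolding Bset_mem using X eq cyF
    by (auto intro!: Fq2_inv Fq2_div Fq2_neg simp: power_inverse)
  have "Bmult q (inverse a, - b / a, cy, inverse d) x = (1,0,0,1)"
    unfolding x Bmult_simp using X(2) d0 by (simp add: cy_def field_simps pq1)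
  with mem show ?thesis by blast
qed

lemma Bgroup: "group (Bgrp q n :: ('k \<times> 'k \<times> 'k \<times> 'k) monoid)"
  apply (rule groupI)
      apply (simp_all add: Bgrp_simps Bmult_closed Bmult_assoc Bone_in Binv_ex)
  apply (case_tac x)
  apply (simp add: Bmult_simp)
  done


definition NN :: nat where "NN = q ^ (2*n) - 1"

lemma card_NN: "card (UNIV :: 'k set) = NN + 1"
proof -
  have "q ^ (2*n) \<ge> 1" using q2 by simp
  thus ?thesis unfolding NN_def cardk by simp
qed

lemma gamma_ex: "\<exists>g::'k. g \<noteq> 0 \<and> (\<forall>x. x \<noteq> 0 \<longrightarrow> (\<exists>i. x = g ^ i)) \<and> g ^ NN = 1 \<and>
   (\<forall>i. 0 < i \<and> i < NN \<longrightarrow> g ^ i \<noteq> 1)"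
proof -
  obtain g :: 'k where g: "g \<noteq> 0" "\<And>x. x \<noteq> 0 \<Longrightarrow> \<exists>i. x = g ^ i" using gen_ex by blast
  have "g ^ (NN + 1) = g" using pow_card_same[of g] card_NN by simp
  hence gN: "g ^ NN = 1" using g(1) by simp
  have ord: "g ^ i \<noteq> 1" if "0 < i" "i < NN" for i
  proof
    assume gi: "g ^ i = 1"
    have "UNIV - {0} \<subseteq> (\<lambda>j. g ^ j) ` {..<i}"
    proof
      fix x :: 'k assume "x \<in> UNIV - {0}"
      then obtain j where "x = g ^ j" using g(2) by blast
      hence "x = g ^ (j mod i)" using pow_mod_one[OF gi] by simp
      moreover have "j mod i < i" using that by simp
      ultimately show "x \<in> (\<lambda>j. g ^ j) ` {..<i}" by blast
    qed
    hence "card (UNIV - {0::'k}) \<le> card ((\<lambda>j. g ^ j) ` {..<i})" by (intro card_mono) auto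
    also have "\<dots> \<le> i" using card_image_le[of "{..<i}" "\<lambda>j. g ^ j"] by simp
    finally have "card (UNIV - {0::'k}) \<le> i" .
    moreover have "card (UNIV - {0::'k}) = NN" using card_NN by (simp add: card_Diff_singleton)
    ultimately show False using that by simp
  qed
  show ?thesis using g gN ord by blast
qed

lemma dvd_NN: "(q^2 - 1) dvd NN"
proof -
  have "[int q ^ 2 = 1] (mod (int q ^ 2 - 1))" by (simp add: cong_iff_dvd_diff)
  hence "[(int q ^ 2) ^ n = 1 ^ n] (mod (int q ^ 2 - 1))" by (rule cong_pow)
  hence "(int q ^ 2 - 1) dvd (int q ^ 2) ^ n - 1" by (simp add: cong_iff_dvd_diff)
  moreover have "int q ^ 2 - 1 = int (q^2 - 1)" using q2 by (simp add: of_nat_diff)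
  moreover have "(int q ^ 2) ^ n - 1 = int NN" using q2 unfolding NN_def
    by (simp add: of_nat_diff power_mult)
  ultimately show ?thesis by (simp add: int_dvd_int_iff)
qed

lemma w_ex: "\<exists>w::'k. w \<in> Fq2 q \<and> w ^ q \<noteq> w"
proof -
  obtain g :: 'k where g: "g \<noteq> 0" "g ^ NN = 1" "\<And>i. 0 < i \<Longrightarrow> i < NN \<Longrightarrow> g ^ i \<noteq> 1"
    using gamma_ex by blast
  obtain M where M: "NN = (q^2 - 1) * M" using dvd_NN by (elim dvdE)
  have n0: "2 * n > 0" using oddn by (cases n) auto
  have "NN > 0" unfolding NN_def using q2 one_less_power[OF _ n0, of q] by simp
  hence M0: "M > 0" using M by (cases M) auto
  define w where "w = g ^ M"
  have w0: "w \<noteq> 0" using g(1) by (simp add: w_def)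
  have "w ^ (q^2) = g ^ (M * (q^2 - 1) + M)" unfolding w_def power_mult[symmetric]
    using q2 by (simp add: algebra_simps)
  also have "\<dots> = w" using g(2) M by (simp add: power_add power_mult w_def mult.commute)
  finally have wF: "w \<in> Fq2 q" by (simp add: Fq2_def)
  moreover have "w ^ q \<noteq> w"
  proof
    assume wq: "w ^ q = w"
    have "w ^ q = w * g ^ (M * (q - 1))" unfolding w_def power_mult[symmetric] power_add[symmetric]
      using q2 by (simp add: algebra_simps)
    hence "g ^ (M * (q - 1)) = 1" using wq w0 by simp
    moreover have "0 < M * (q - 1)" using M0 q2 by simp
    moreover have "M * (q - 1) < NN"
    proof -
      have a: "2 * q \<le> q * q" using q2 by (intro mult_right_mono) auto
      have "q - 1 < q^2 - 1" using q2 a unfolding power2_eq_square by linarith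
      thus ?thesis unfolding M using M0 by (simp add: mult.commute)
    qed
    ultimately show False using g(3) by blast
  qed
  ultimately show ?thesis by blast
qed


lemma sg_B: "subgroup G (Bgrp q n) \<Longrightarrow> x \<in> G \<Longrightarrow> (x::'k\<times>'k\<times>'k\<times>'k) \<in> Bset q n"
  using subgroup.subset by (fastforce simp: Bgrp_simps)

lemma sg_mult: "subgroup G (Bgrp q n) \<Longrightarrow> x \<in> G \<Longrightarrow> y \<in> G \<Longrightarrow> Bmult q x (y::'k\<times>'k\<times>'k\<times>'k) \<in> G"
  using subgroup.m_closed by (fastforce simp: Bgrp_simps)

lemma sg_one: "subgroup G (Bgrp q n) \<Longrightarrow> ((1::'k),0,0,1) \<in> G"
  using subgroup.one_closed by (fastforce simp: Bgrp_simps)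

lemma sg_inv: "subgroup G (Bgrp q n) \<Longrightarrow> (x::'k\<times>'k\<times>'k\<times>'k) \<in> G \<Longrightarrow>
   \<exists>y\<in>G. Bmult q y x = (1,0,0,1)"
proof -
  assume sg: "subgroup G (Bgrp q n)" and x: "x \<in> G"
  interpret BG: group "Bgrp q n :: ('k \<times> 'k \<times> 'k \<times> 'k) monoid" by (rule Bgroup)
  have xc: "x \<in> carrier (Bgrp q n)" using sg x subgroup.subset by blast
  have "inv\<^bsub>Bgrp q n\<^esub> x \<in> G" using sg x by (rule subgroup.m_inv_closed)
  moreover have "inv\<^bsub>Bgrp q n\<^esub> x \<otimes>\<^bsub>Bgrp q n\<^esub> x = \<one>\<^bsub>Bgrp q n\<^esub>" using xc by (rule BG.l_inv)
  hence "Bmult q (inv\<^bsub>Bgrp q n\<^esub> x) x = (1,0,0,1)" by (simp only: Bgrp_simps)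
  ultimately show ?thesis by blast
qed

lemma sg_conj: "subgroup G (Bgrp q n) \<Longrightarrow> g \<in> G \<Longrightarrow> u \<in> G \<Longrightarrow>
   \<exists>u'\<in>G. Bmult q g u' = Bmult q u (g::'k\<times>'k\<times>'k\<times>'k)"
proof -
  assume sg: "subgroup G (Bgrp q n)" and g: "g \<in> G" and u: "u \<in> G"
  interpret BG: group "Bgrp q n :: ('k \<times> 'k \<times> 'k \<times> 'k) monoid" by (rule Bgroup)
  have gc: "g \<in> carrier (Bgrp q n)" and uc: "u \<in> carrier (Bgrp q n)"
    using sg g u subgroup.subset by blast+
  define u' where "u' = inv\<^bsub>Bgrp q n\<^esub> g \<otimes>\<^bsub>Bgrp q n\<^esub> u \<otimes>\<^bsub>Bgrp q n\<^esub> g"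
  have "u' \<in> G" unfolding u'_def using sg g u
    by (intro subgroup.m_closed subgroup.m_inv_closed) auto
  moreover have "g \<otimes>\<^bsub>Bgrp q n\<^esub> u' = u \<otimes>\<^bsub>Bgrp q n\<^esub> g"
    unfolding u'_def using gc uc by (simp add: BG.m_assoc[symmetric])
  hence "Bmult q g u' = Bmult q u g" by (simp only: Bgrp_simps)
  ultimately show ?thesis by blast
qed

lemma sg_div: "subgroup G (Bgrp q n) \<Longrightarrow> x \<in> G \<Longrightarrow> y \<in> G \<Longrightarrow>
   \<exists>w\<in>G. Bmult q x w = (y::'k\<times>'k\<times>'k\<times>'k)"
proof -
  assume sg: "subgroup G (Bgrp q n)" and x: "x \<in> G" and y: "y \<in> G"
  interpret BG: group "Bgrp q n :: ('k \<times> 'k \<times> 'k \<times> 'k) monoid" by (rule Bgroup)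
  have xc: "x \<in> carrier (Bgrp q n)" and yc: "y \<in> carrier (Bgrp q n)"
    using sg x y subgroup.subset by blast+
  define w where "w = inv\<^bsub>Bgrp q n\<^esub> x \<otimes>\<^bsub>Bgrp q n\<^esub> y"
  have "w \<in> G" unfolding w_def using sg x y
    by (intro subgroup.m_closed subgroup.m_inv_closed) auto
  moreover have "x \<otimes>\<^bsub>Bgrp q n\<^esub> w = y"
    unfolding w_def using xc yc by (simp add: BG.m_assoc[symmetric])
  hence "Bmult q x w = y" by (simp only: Bgrp_simps)
  ultimately show ?thesis by blast
qed

lemma conj_scale:
  assumes sg: "subgroup G (Bgrp q n)" and g: "(a,beta,gam,del) \<in> G" and u: "((1::'k),b,c,ee) \<in> G"
  shows "\<exists>c1 d1. (1, a*b, c1, d1) \<in> G \<and> (b = 0 \<longrightarrow> c1 = a^(q+1)*c)"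
proof -
  obtain u' where u': "u' \<in> G" "Bmult q (a,beta,gam,del) u' = Bmult q (1,b,c,ee) (a,beta,gam,del)"
    using sg_conj[OF sg g u] by blast
  obtain a1 b1 c1 d1 where uu: "u' = (a1,b1,c1,d1)" by (cases u') auto
  have a0: "a \<noteq> 0" using sg_B[OF sg g] by (simp add: Bset_mem)
  from u'(2) have e: "a * a1 = a" "a1 * beta + b1 = a * b + beta"
     "a1^(q+1) * gam + a1 * b1^q * beta + c1 = a^(q+1)*c + a*beta^q*b + gam"
    unfolding uu Bmult_simp by (auto simp: mult.commute)
  have a1: "a1 = 1" using e(1) a0 by simp
  have b1: "b1 = a * b" using e(2) a1 by simp
  have "b = 0 \<longrightarrow> c1 = a^(q+1)*c" using e(3) a1 b1 q2 by (auto simp: frob_zero)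
  thus ?thesis using u'(1) uu a1 b1 by blast
qed

lemma G0_props:
  fixes G :: "('k\<times>'k\<times>'k\<times>'k) set"
  assumes sg: "subgroup G (Bgrp q n)"
  shows "1 \<in> G0of G" "\<And>x y. x \<in> G0of G \<Longrightarrow> y \<in> G0of G \<Longrightarrow> x * y \<in> G0of G"
    "\<And>x. x \<in> G0of G \<Longrightarrow> x \<noteq> 0 \<and> inverse x \<in> G0of G"
    "\<And>x. x \<in> G0of G \<Longrightarrow> x ^ mm q n \<in> Fq2 q \<and> x ^ mm q n \<noteq> 0"
proof -
  show "1 \<in> G0of G" using sg_one[OF sg] unfolding G0of_def by blast
  fix x y assume "x \<in> G0of G" "y \<in> G0of G"
  then obtain a b c a' b' c' where "(a,b,c,x) \<in> G" "(a',b',c',y) \<in> G" unfolding G0of_def by blast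
  from sg_mult[OF sg this] show "x * y \<in> G0of G" unfolding G0of_def Bmult_simp by blast
next
  fix x assume "x \<in> G0of G"
  then obtain a b c where xg: "(a,b,c,x) \<in> G" unfolding G0of_def by blast
  then obtain y where y: "y \<in> G" "Bmult q y (a,b,c,x) = (1,0,0,1)" using sg_inv[OF sg] by blast
  obtain a' b' c' d' where yy: "y = (a',b',c',d')" by (cases y) auto
  have "d' * x = 1" using y(2) unfolding yy Bmult_simp by simp
  hence x0: "x \<noteq> 0" by auto
  hence "inverse x = d'" using \<open>d' * x = 1\<close> by (metis inverse_unique mult.commute)
  thus "x \<noteq> 0 \<and> inverse x \<in> G0of G" using y(1) yy x0 unfolding G0of_def by blast
  show "x ^ mm q n \<in> Fq2 q \<and> x ^ mm q n \<noteq> 0" using sg_B[OF sg xg] by (simp add: Bset_mem)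
qed

lemma G0_pow: "subgroup G (Bgrp q n :: ('k\<times>'k\<times>'k\<times>'k) monoid) \<Longrightarrow> x \<in> G0of G \<Longrightarrow> x ^ k \<in> G0of G"
  by (induction k) (auto intro: G0_props)

lemma G0_cyclic:
  fixes G :: "('k\<times>'k\<times>'k\<times>'k) set"
  assumes sg: "subgroup G (Bgrp q n)"
  shows "\<exists>g::'k. g ^ (mm q n * (q^2 - 1)) = 1 \<and> G0of G = range (\<lambda>k::nat. g ^ k)"
proof -
  obtain ga :: 'k where ga: "ga \<noteq> 0" "\<And>x. x \<noteq> 0 \<Longrightarrow> \<exists>i. x = ga ^ i" "ga ^ NN = 1"
    using gamma_ex by blast
  have n0: "2 * n > 0" using oddn by (cases n) auto
  have "NN > 0" unfolding NN_def using q2 one_less_power[OF _ n0, of q] by simp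
  moreover have "ga ^ NN \<in> G0of G" using ga(3) G0_props(1)[OF sg] by simp
  ultimately have ex: "\<exists>i. 0 < i \<and> ga ^ i \<in> G0of G" by blast
  define i0 where "i0 = (LEAST i. 0 < i \<and> ga ^ i \<in> G0of G)"
  have i0: "0 < i0" "ga ^ i0 \<in> G0of G" using LeastI_ex[OF ex] unfolding i0_def by auto
  have i0min: "\<And>i. 0 < i \<Longrightarrow> ga ^ i \<in> G0of G \<Longrightarrow> i0 \<le> i"
    unfolding i0_def by (simp add: Least_le)
  define g where "g = ga ^ i0"
  have "G0of G = range (\<lambda>k::nat. g ^ k)"
  proof
    show "range (\<lambda>k::nat. g ^ k) \<subseteq> G0of G" using G0_pow[OF sg] i0(2) unfolding g_def by blast
  next
    show "G0of G \<subseteq> range (\<lambda>k::nat. g ^ k)"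
    proof
      fix x assume x: "x \<in> G0of G"
      hence "x \<noteq> 0" using G0_props(3)[OF sg] by blast
      then obtain j where j: "x = ga ^ j" using ga(2) by blast
      have "ga ^ j = g ^ (j div i0) * ga ^ (j mod i0)"
      proof -
        have "ga ^ j = ga ^ (i0 * (j div i0) + j mod i0)" by simp
        also have "\<dots> = g ^ (j div i0) * ga ^ (j mod i0)" unfolding g_def
          by (simp only: power_add power_mult)
        finally show ?thesis .
      qed
      hence r: "ga ^ (j mod i0) = inverse (g ^ (j div i0)) * x"
        using j ga(1) by (simp add: field_simps g_def)
      have "inverse (g ^ (j div i0)) \<in> G0of G"
        using G0_props(3)[OF sg] G0_pow[OF sg] i0(2) unfolding g_def by blast
      hence "ga ^ (j mod i0) \<in> G0of G" using r x G0_props(2)[OF sg] by simp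
      moreover have "j mod i0 < i0" using i0(1) by simp
      ultimately have "j mod i0 = 0" using i0min by (metis not_gr0 not_le)
      hence "x = g ^ (j div i0)" using j \<open>ga ^ j = _\<close> by simp
      thus "x \<in> range (\<lambda>k::nat. g ^ k)" by blast
    qed
  qed
  moreover have "g ^ (mm q n * (q^2 - 1)) = 1"
  proof -
    have "g \<in> G0of G" using i0(2) unfolding g_def .
    hence gm: "g ^ mm q n \<in> Fq2 q" "g ^ mm q n \<noteq> 0" using G0_props(4)[OF sg] by auto
    have "(g ^ mm q n) ^ (q^2 - 1) * g ^ mm q n = (g ^ mm q n) ^ (q^2)"
      using q2 by (simp add: power_Suc2[symmetric])
    also have "\<dots> = g ^ mm q n" using gm(1) by (simp add: Fq2_def)
    finally have "(g ^ mm q n) ^ (q^2 - 1) * g ^ mm q n = g ^ mm q n" .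
    hence "(g ^ mm q n) ^ (q^2 - 1) = 1" using gm(2) mult_cancel_right2 by blast
    thus ?thesis by (simp add: power_mult)
  qed
  ultimately show ?thesis by blast
qed


lemma char2_eq: "p = 2 \<Longrightarrow> (x::'k) + x = 0"
proof -
  assume "p = 2"
  hence "(of_nat 2 :: 'k) = 0" using p0 by simp
  hence two: "(2::'k) = 0" by (simp only: of_nat_numeral)
  have "x + x = 2 * x" by (simp only: mult_2)
  also have "\<dots> = 0" by (simp only: two mult_zero_left)
  finally show ?thesis .
qed

lemma forward:
  fixes G :: "('k\<times>'k\<times>'k\<times>'k) set"
  assumes sg: "subgroup G (Bgrp q n)"
  shows "triple_ok p q n (G0of G) (G2of G) (G3of G)"
proof -
  have inB: "\<And>x. x \<in> G \<Longrightarrow> x \<in> Bset q n" using sg_B[OF sg] .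
  have G2F: "G2of G \<subseteq> Fq2 q" unfolding G2of_def using inB by (auto simp: Bset_mem)
  have G3F: "G3of G \<subseteq> {c \<in> Fq2 q. c ^ q + c = 0}" unfolding G3of_def using inB q2
    by (auto simp: Bset_mem)
  have vs2: "is_vs_over (gen_field ((\<lambda>x. x ^ mm q n) ` G0of G)) (G2of G)"
  proof (rule vs_gen)
    show "0 \<in> G2of G" using sg_one[OF sg] unfolding G2of_def by blast
  next
    fix x y assume "x \<in> G2of G" "y \<in> G2of G"
    then obtain c d c' d' where "(1,x,c,d) \<in> G" "(1,y,c',d') \<in> G" unfolding G2of_def by blast
    from sg_mult[OF sg this] show "x + y \<in> G2of G" unfolding G2of_def Bmult_simp by auto
  next
    fix x assume "x \<in> G2of G"
    then obtain c d where u: "(1,x,c,d) \<in> G" unfolding G2of_def by blast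
    obtain y where y: "y \<in> G" "Bmult q y (1,x,c,d) = (1,0,0,1)" using sg_inv[OF sg u] by blast
    obtain a' b' c' d' where yy: "y = (a',b',c',d')" by (cases y) auto
    have "a' = 1" "b' = - x" using y(2) unfolding yy Bmult_simp by (auto simp: eq_neg_iff_add_eq_0)
    thus "- x \<in> G2of G" using y(1) yy unfolding G2of_def by blast
  next
    fix s x assume "s \<in> (\<lambda>x. x ^ mm q n) ` G0of G" "x \<in> G2of G"
    then obtain d a b c c' d' where s: "s = d ^ mm q n" "(a,b,c,d) \<in> G" and u: "(1,x,c',d') \<in> G"
      unfolding G0of_def G2of_def by blast
    have "a = d ^ mm q n" using inB[OF s(2)] by (simp add: Bset_mem)
    with conj_scale[OF sg s(2) u] show "s * x \<in> G2of G" using s(1) unfolding G2of_def by blast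
  qed
  have vs3: "is_vs_over (gen_field ((\<lambda>x. x ^ (q ^ n + 1)) ` G0of G)) (G3of G)"
  proof (rule vs_gen)
    show "0 \<in> G3of G" using sg_one[OF sg] unfolding G3of_def by blast
  next
    fix x y assume "x \<in> G3of G" "y \<in> G3of G"
    then obtain d d' where "(1,0,x,d) \<in> G" "(1,0,y,d') \<in> G" unfolding G3of_def by blast
    from sg_mult[OF sg this] show "x + y \<in> G3of G" unfolding G3of_def Bmult_simp using q2
      by (auto simp: frob_zero add.commute)
  next
    fix x assume "x \<in> G3of G"
    then obtain d where u: "(1,0,x,d) \<in> G" unfolding G3of_def by blast
    obtain y where y: "y \<in> G" "Bmult q y (1,0,x,d) = (1,0,0,1)" using sg_inv[OF sg u] by blast
    obtain a' b' c' d' where yy: "y = (a',b',c',d')" by (cases y) auto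
    have "a' = 1" "b' = 0" "c' = - x" using y(2) q2 unfolding yy Bmult_simp
      by (auto simp: eq_neg_iff_add_eq_0 frob_zero)
    thus "- x \<in> G3of G" using y(1) yy unfolding G3of_def by blast
  next
    fix s x assume "s \<in> (\<lambda>x. x ^ (q ^ n + 1)) ` G0of G" "x \<in> G3of G"
    then obtain d a b c d' where s: "s = d ^ (q ^ n + 1)" "(a,b,c,d) \<in> G" and u: "(1,0,x,d') \<in> G"
      unfolding G0of_def G3of_def by blast
    have "a = d ^ mm q n" using inB[OF s(2)] by (simp add: Bset_mem)
    have "s = d ^ (mm q n * (q+1))" by (simp only: m_eq s(1))
    hence "s = a ^ (q+1)" using \<open>a = d ^ mm q n\<close> by (simp only: power_mult)
    with conj_scale[OF sg s(2) u] show "s * x \<in> G3of G" unfolding G3of_def by auto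
  qed
  have W: "Wset p q (G2of G) \<subseteq> G3of G"
  proof (cases "p = 2")
    case True
    show ?thesis
    proof
      fix w assume "w \<in> Wset p q (G2of G)"
      then obtain b where wb: "w = b ^ (q+1)" and "b \<in> G2of G" using True unfolding Wset_def by auto
      then obtain c d where u: "(1,b,c,d) \<in> G" unfolding G2of_def by blast
      from sg_mult[OF sg u u] have "(1, b + b, c + b^q*b + c, d*d) \<in> G" by (simp add: Bmult_simp)
      moreover have "b + b = 0" "c + b^q*b + c = b^(q+1)" using char2_eq[OF True]
        by (auto simp: algebra_simps)
      ultimately show "w \<in> G3of G" unfolding G3of_def wb by auto
    qed
  next
    case False
    show ?thesis
    proof
      fix w0 assume "w0 \<in> Wset p q (G2of G)"
      then obtain b1 b2 where wb: "w0 = b1 * b2 ^ q - b2 * b1 ^ q" and "b1 \<in> G2of G" "b2 \<in> G2of G"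
        using False unfolding Wset_def by auto
      then obtain c1 d1 c2 d2 where u1: "(1,b1,c1,d1) \<in> G" and u2: "(1,b2,c2,d2) \<in> G"
        unfolding G2of_def by blast
      have m1: "Bmult q (1,b1,c1,d1) (1,b2,c2,d2) \<in> G" using sg_mult[OF sg u1 u2] .
      have m2: "Bmult q (1,b2,c2,d2) (1,b1,c1,d1) \<in> G" using sg_mult[OF sg u2 u1] .
      obtain w where w: "w \<in> G" "Bmult q (Bmult q (1,b2,c2,d2) (1,b1,c1,d1)) w = Bmult q (1,b1,c1,d1) (1,b2,c2,d2)"
        using sg_div[OF sg m2 m1] by blast
      obtain aw bw cw dw where ww: "w = (aw,bw,cw,dw)" by (cases w) auto
      from w(2) have e: "aw = 1" "aw * (b2 + b1) + bw = b1 + b2"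
        "aw^(q+1) * (c2 + b1^q*b2 + c1) + aw * bw^q * (b2 + b1) + cw = c1 + b2^q*b1 + c2"
        unfolding ww Bmult_simp by (auto simp: add.commute)
      have bw: "bw = 0" using e(1,2) by (simp add: add.commute)
      have "cw = b1 * b2 ^ q - b2 * b1 ^ q" using e(3) e(1) bw q2
        by (simp add: frob_zero algebra_simps)
      thus "w0 \<in> G3of G" using w(1) ww e(1) bw unfolding G3of_def wb by blast
    qed
  qed
  show ?thesis unfolding triple_ok_def using G0_cyclic[OF sg] G2F vs2 G3F vs3 W by blast
qed


lemma fin_sg:
  fixes H :: "('k\<times>'k\<times>'k\<times>'k) set"
  assumes HB: "H \<subseteq> Bset q n" and H1: "(1,0,0,1) \<in> H" and Hm: "\<And>x y. x \<in> H \<Longrightarrow> y \<in> H \<Longrightarrow> Bmult q x y \<in> H"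
  shows "subgroup H (Bgrp q n)"
proof -
  interpret BG: group "Bgrp q n :: ('k \<times> 'k \<times> 'k \<times> 'k) monoid" by (rule Bgroup)
  have Hc: "H \<subseteq> carrier (Bgrp q n)" using HB by (simp only: Bgrp_simps)
  have Hm': "\<And>x y. x \<in> H \<Longrightarrow> y \<in> H \<Longrightarrow> x \<otimes>\<^bsub>Bgrp q n\<^esub> y \<in> H"
    using Hm by (simp only: Bgrp_simps)
  show ?thesis
  proof (rule BG.subgroupI)
    show "H \<subseteq> carrier (Bgrp q n)" by (rule Hc)
    show "H \<noteq> {}" using H1 by blast
    fix a b assume "a \<in> H" "b \<in> H" thus "a \<otimes>\<^bsub>Bgrp q n\<^esub> b \<in> H" by (rule Hm')
  next
    fix a assume a: "a \<in> H"
    have inj: "inj_on (\<lambda>y. y \<otimes>\<^bsub>Bgrp q n\<^esub> a) H"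
      using Hc a by (intro inj_onI) (auto simp: BG.right_cancel subsetD)
    have sub: "(\<lambda>y. y \<otimes>\<^bsub>Bgrp q n\<^esub> a) ` H \<subseteq> H" using Hm' a by blast
    have "(\<lambda>y. y \<otimes>\<^bsub>Bgrp q n\<^esub> a) ` H = H" by (rule endo_inj_surj[OF _ sub inj]) simp
    moreover have "\<one>\<^bsub>Bgrp q n\<^esub> \<in> H" using H1 by (simp only: Bgrp_simps)
    ultimately obtain y where y: "y \<in> H" "y \<otimes>\<^bsub>Bgrp q n\<^esub> a = \<one>\<^bsub>Bgrp q n\<^esub>" by force
    hence "inv\<^bsub>Bgrp q n\<^esub> a = y" using Hc a by (intro BG.inv_equality) auto
    thus "inv\<^bsub>Bgrp q n\<^esub> a \<in> H" using y by simp
  qed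
qed

lemma two_ne: "p \<noteq> 2 \<Longrightarrow> (2::'k) \<noteq> 0"
proof
  assume "p \<noteq> 2" "(2::'k) = 0"
  hence "(of_nat 2::'k) = 0" by simp
  hence "CHAR('k) dvd 2" by (simp only: of_nat_eq_0_iff_char_dvd)
  hence "p dvd 2" using CHAR_k by simp
  hence "p = 2" using prime_p by (simp add: primes_dvd_imp_eq)
  with \<open>p \<noteq> 2\<close> show False by simp
qed

lemma Wpair:
  assumes tok: "triple_ok p q n G0 G2 (G3::'k set)" and x: "x \<in> G2" and y: "y \<in> G2"
  shows "x * y ^ q - y * x ^ q \<in> G3"
proof (cases "p = 2")
  case False
  have "Wset p q G2 \<subseteq> G3" using tok unfolding triple_ok_def by auto
  hence "{b1 * b2 ^ q - b2 * b1 ^ q |b1 b2. b1 \<in> G2 \<and> b2 \<in> G2} \<subseteq> G3"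
    using False unfolding Wset_def by simp
  thus ?thesis using x y by blast
next
  case True
  have vs3: "is_vs_over (gen_field ((\<lambda>x. x ^ (q^n + 1)) ` G0)) G3" and
       vs2: "is_vs_over (gen_field ((\<lambda>x. x ^ mm q n) ` G0)) G2" and
       W: "Wset p q G2 \<subseteq> G3" and G2F: "G2 \<subseteq> Fq2 q"
    using tok unfolding triple_ok_def by auto
  have xy: "x + y \<in> G2" using vs_facts(2)[OF vs2 x y] .
  have W': "\<And>b. b \<in> G2 \<Longrightarrow> b ^ (q+1) \<in> G3" using W True unfolding Wset_def by auto
  have e: "x * y ^ q - y * x ^ q = (x + y) ^ (q+1) - x ^ (q+1) - y ^ (q+1) - 2 * (y * x^q)"
    using Fq2_qq by (simp add: frob_add algebra_simps)
  have two: "(2::'k) = 0" using char2_eq[OF True, of 1] by simp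
  show ?thesis unfolding e two
    using vs_facts(5)[OF vs3] W' x y xy by simp
qed

lemma converse_from_f:
  fixes G0 G2 G3 :: "'k set" and f :: "'k \<Rightarrow> 'k"
  assumes tok: "triple_ok p q n G0 G2 G3"
    and f1: "\<And>b. b \<in> G2 \<Longrightarrow> f b \<in> Fq2 q \<and> f b ^ q + f b = b ^ (q+1)"
    and f2: "\<And>x y. x \<in> G2 \<Longrightarrow> y \<in> G2 \<Longrightarrow> f (x + y) - f x - f y - x ^ q * y \<in> G3"
    and f3: "\<And>d b. d \<in> G0 \<Longrightarrow> b \<in> G2 \<Longrightarrow> f (d ^ mm q n * b) - (d ^ mm q n) ^ (q+1) * f b \<in> G3"
  shows "\<exists>H. subgroup H (Bgrp q n) \<and> G0of H = G0 \<and> G2of H = G2 \<and> G3of H = G3"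
proof -
  obtain g :: 'k where g: "g ^ (mm q n * (q^2 - 1)) = 1" and G0: "G0 = range (\<lambda>k::nat. g ^ k)"
    using tok unfolding triple_ok_def by blast
  have vs3: "is_vs_over (gen_field ((\<lambda>x. x ^ (q^n + 1)) ` G0)) G3" and
       vs2: "is_vs_over (gen_field ((\<lambda>x. x ^ mm q n) ` G0)) G2" and
       G2F: "G2 \<subseteq> Fq2 q" and G3K: "G3 \<subseteq> {c \<in> Fq2 q. c ^ q + c = 0}"
    using tok unfolding triple_ok_def by auto
  have g0: "g \<noteq> 0"
  proof
    assume "g = 0"
    have "q^2 \<ge> 4" using q2 by (metis power2_nat_le_eq_le power2_eq_square numeral_Bit0 numeral_One mult_2 one_add_one)
    hence "mm q n * (q^2 - 1) > 0" using m_pos by simp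
    hence "(0::'k) ^ (mm q n * (q^2 - 1)) = 0" by (rule zero_power)
    with g \<open>g = 0\<close> show False by simp
  qed
  have G0m: "d ^ mm q n \<in> Fq2 q \<and> d ^ mm q n \<noteq> 0" if dG: "d \<in> G0" for d
  proof -
    obtain k where k: "d = g ^ k" using dG G0 by blast
    have "(d ^ mm q n) ^ (q^2 - 1) = (g ^ (mm q n * (q^2 - 1))) ^ k" unfolding k
      by (simp add: power_mult[symmetric] ac_simps)
    hence L: "(d ^ mm q n) ^ (q^2 - 1) = 1" using g by simp
    have "q^2 = Suc (q^2 - 1)" using q2 by (simp add: Suc_diff_1)
    hence "(d ^ mm q n) ^ (q^2) = d ^ mm q n * (d ^ mm q n) ^ (q^2 - 1)"
      by (metis power_Suc)
    hence "(d ^ mm q n) ^ (q^2) = d ^ mm q n" using L by simp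
    moreover have "d ^ mm q n \<noteq> 0" using g0 k by simp
    ultimately show ?thesis by (simp add: Fq2_def)
  qed
  have G0mult: "d * d' \<in> G0" if dd: "d \<in> G0" "d' \<in> G0" for d d'
  proof -
    obtain i j where "d = g ^ i" "d' = g ^ j" using dd G0 by blast
    hence "d * d' = g ^ (i + j)" by (simp add: power_add)
    thus ?thesis using G0 by blast
  qed
  have "g ^ 0 \<in> G0" using G0 by blast
  hence G01: "1 \<in> G0" by simp
  define FA where "FA = gen_field ((\<lambda>x. x ^ mm q n) ` G0)"
  define FB where "FB = gen_field ((\<lambda>x. x ^ (q^n + 1)) ` G0)"
  have AFA: "d ^ mm q n \<in> FA" if "d \<in> G0" for d
  proof -
    have "d ^ mm q n \<in> (\<lambda>x. x ^ mm q n) ` G0" using that by (rule imageI)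
    thus ?thesis using gen_field_ge unfolding FA_def by (rule subsetD[rotated])
  qed
  have BFB: "(d ^ mm q n) ^ (q+1) \<in> FB" if "d \<in> G0" for d
  proof -
    have "(d ^ mm q n) ^ (q+1) = d ^ (q^n+1)" by (simp only: power_mult[symmetric] m_eq)
    moreover have "d ^ (q^n+1) \<in> (\<lambda>x. x ^ (q^n+1)) ` G0" using that by (rule imageI)
    ultimately show ?thesis using gen_field_ge unfolding FB_def by (metis subsetD)
  qed
  note V2 = vs_facts[OF vs2, folded FA_def] and V3 = vs_facts[OF vs3, folded FB_def]
  have f0: "f 0 \<in> G3"
  proof -
    have "f (0 + 0) - f 0 - f 0 - 0 ^ q * 0 \<in> G3" using f2 V2(1) by blast
    hence "- f 0 \<in> G3" by simp
    thus ?thesis using V3(3) by fastforce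
  qed
  define H where "H = {(d ^ mm q n, b, f b + t, d) | d b t. d \<in> G0 \<and> b \<in> G2 \<and> t \<in> G3}"
  have HB: "H \<subseteq> Bset q n"
  proof
    fix x assume "x \<in> H"
    then obtain d b t where x: "x = (d ^ mm q n, b, f b + t, d)" and dbt: "d \<in> G0" "b \<in> G2" "t \<in> G3"
      unfolding H_def by blast
    have t: "t \<in> Fq2 q" "t ^ q + t = 0" using G3K dbt(3) by auto
    have "(f b + t) ^ q + (f b + t) = b ^ (q+1)" using f1[OF dbt(2)] t(2)
      by (simp add: frob_add algebra_simps)
    thus "x \<in> Bset q n" unfolding x Bset_mem using G0m[OF dbt(1)] G2F dbt(2) f1[OF dbt(2)] t(1)
      by (auto intro: Fq2_add)
  qed
  have H1: "(1,0,0,1) \<in> H"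
  proof -
    have "(1 ^ mm q n, 0, f 0 + - f 0, 1) \<in> H" unfolding H_def using G01 V2(1) V3(3)[OF f0] by blast
    thus ?thesis by simp
  qed
  have Hm: "Bmult q x y \<in> H" if xyH: "x \<in> H" "y \<in> H" for x y
  proof -
    obtain d' b' t' where x: "x = (d' ^ mm q n, b', f b' + t', d')" and dbt': "d' \<in> G0" "b' \<in> G2" "t' \<in> G3"
      using xyH(1) unfolding H_def by blast
    obtain d b t where y: "y = (d ^ mm q n, b, f b + t, d)" and dbt: "d \<in> G0" "b \<in> G2" "t \<in> G3"
      using xyH(2) unfolding H_def by blast
    define a where "a = d ^ mm q n"
    define x0 where "x0 = a * b'"
    have x0G: "x0 \<in> G2" unfolding x0_def a_def using V2(4)[OF AFA[OF dbt(1)] dbt'(2)] .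
    define E1 where "E1 = f (x0 + b) - f x0 - f b - x0 ^ q * b"
    define E2 where "E2 = f x0 - a ^ (q+1) * f b'"
    define E3 where "E3 = x0 * b ^ q - b * x0 ^ q"
    have E1: "E1 \<in> G3" unfolding E1_def using f2[OF x0G dbt(2)] .
    have E2: "E2 \<in> G3" unfolding E2_def x0_def a_def using f3[OF dbt(1) dbt'(2)] .
    have E3: "E3 \<in> G3" unfolding E3_def using Wpair[OF tok x0G dbt(2)] .
    have at: "a ^ (q+1) * t' \<in> G3" unfolding a_def using V3(4)[OF BFB[OF dbt(1)] dbt'(3)] .
    define T where "T = a ^ (q+1) * t' + t - E1 - E2 + E3"
    have T: "T \<in> G3" unfolding T_def using V3(2,5) E1 E2 E3 at dbt(3) by metis
    have "Bmult q x y = ((d' * d) ^ mm q n, x0 + b, f (x0 + b) + T, d' * d)"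
      unfolding x y Bmult_simp T_def E1_def E2_def E3_def x0_def a_def
      by (simp add: algebra_simps power_mult_distrib)
    moreover have "x0 + b \<in> G2" using V2(2)[OF x0G dbt(2)] .
    ultimately show ?thesis unfolding H_def using G0mult[OF dbt'(1) dbt(1)] T by blast
  qed
  have sg: "subgroup H (Bgrp q n)" by (rule fin_sg[OF HB H1 Hm])
  have "G0of H = G0"
  proof
    show "G0of H \<subseteq> G0" unfolding G0of_def H_def by blast
    show "G0 \<subseteq> G0of H"
    proof
      fix d assume "d \<in> G0"
      hence "(d ^ mm q n, 0, f 0 + - f 0, d) \<in> H" unfolding H_def using V2(1) V3(3)[OF f0] by blast
      thus "d \<in> G0of H" unfolding G0of_def by blast
    qed
  qed
  moreover have "G2of H = G2"
  proof
    show "G2of H \<subseteq> G2" unfolding G2of_def H_def by blast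
    show "G2 \<subseteq> G2of H"
    proof
      fix b assume "b \<in> G2"
      hence "(1 ^ mm q n, b, f b + 0, 1) \<in> H" unfolding H_def using G01 V3(1) by blast
      thus "b \<in> G2of H" unfolding G2of_def by auto
    qed
  qed
  moreover have "G3of H = G3"
  proof
    show "G3of H \<subseteq> G3"
    proof
      fix c assume "c \<in> G3of H"
      then obtain d t where "c = f 0 + t" "t \<in> G3" unfolding G3of_def H_def by blast
      thus "c \<in> G3" using V3(2) f0 by blast
    qed
    show "G3 \<subseteq> G3of H"
    proof
      fix c assume c: "c \<in> G3"
      have "(1 ^ mm q n, 0, f 0 + (c - f 0), 1) \<in> H" unfolding H_def using G01 V2(1) V3(5)[OF c f0] by blast
      thus "c \<in> G3of H" unfolding G3of_def by auto
    qed
  qed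
  ultimately show ?thesis using sg by blast
qed


lemma id_half:
  fixes I x y xq yq :: "'a::comm_ring_1"
  assumes "I * 2 = 1"
  shows "((xq+yq)*(x+y)) * I - (xq*x) * I - (yq*y) * I - xq*y = I*(x*yq - y*xq)"
proof -
  have e: "I*(2*(xq*y)) = xq*y" using assms by (simp add: mult.assoc[symmetric])
  have "((xq+yq)*(x+y)) * I - (xq*x) * I - (yq*y) * I - xq*y
      = ((xq+yq)*(x+y)) * I - (xq*x) * I - (yq*y) * I - I*(2*(xq*y))" by (simp only: e)
  also have "\<dots> = I*(x*yq - y*xq)" by (simp add: algebra_simps mult_2)
  finally show ?thesis .
qed

lemma f_odd:
  fixes G0 G2 G3 :: "'k set"
  assumes tok: "triple_ok p q n G0 G2 G3" and p2: "p \<noteq> 2"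
  shows "\<exists>f. (\<forall>b\<in>G2. f b \<in> Fq2 q \<and> f b ^ q + f b = b ^ (q+1)) \<and>
     (\<forall>x\<in>G2. \<forall>y\<in>G2. f (x + y) - f x - f y - x ^ q * y \<in> G3) \<and>
     (\<forall>d\<in>G0. \<forall>b\<in>G2. f (d ^ mm q n * b) - (d ^ mm q n) ^ (q+1) * f b \<in> G3)"
proof -
  have vs3: "is_vs_over (gen_field ((\<lambda>x. x ^ (q^n + 1)) ` G0)) G3" and
       G2F: "G2 \<subseteq> Fq2 q"
    using tok unfolding triple_ok_def by auto
  note V3 = vs_facts[OF vs3]
  have two0: "(2::'k) \<noteq> 0" using two_ne[OF p2] .
  have twoF: "(2::'k) \<in> Fq2 q" using Fq2_add[OF Fq2_1 Fq2_1] by (simp add: one_add_one)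
  have inv2: "inverse (2::'k) \<in> gen_field ((\<lambda>x. x ^ (q^n + 1)) ` G0)"
  proof -
    have sf: "is_subfield_set (gen_field ((\<lambda>x. x ^ (q^n + 1)) ` G0))" by (rule gen_field_sub)
    hence "(1::'k) + 1 \<in> gen_field ((\<lambda>x. x ^ (q^n + 1)) ` G0)" unfolding is_subfield_set_def by blast
    hence "(2::'k) \<in> gen_field ((\<lambda>x. x ^ (q^n + 1)) ` G0)" by (simp add: one_add_one)
    thus ?thesis using sf two0 unfolding is_subfield_set_def by blast
  qed
  define f where "f = (\<lambda>b::'k. b ^ (q+1) / 2)"
  have "\<forall>b\<in>G2. f b \<in> Fq2 q \<and> f b ^ q + f b = b ^ (q+1)"
  proof
    fix b assume "b \<in> G2"
    hence bF: "b \<in> Fq2 q" using G2F by blast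
    have "f b ^ q = b ^ (q+1) / 2" unfolding f_def power_divide Fq2_norm[OF bF] two_q ..
    hence "f b ^ q + f b = b ^ (q+1)" unfolding f_def using two0 by (simp add: field_simps)
    moreover have "f b \<in> Fq2 q" unfolding f_def using bF twoF by (intro Fq2_div Fq2_pow)
    ultimately show "f b \<in> Fq2 q \<and> f b ^ q + f b = b ^ (q+1)" by blast
  qed
  moreover have "\<forall>x\<in>G2. \<forall>y\<in>G2. f (x + y) - f x - f y - x ^ q * y \<in> G3"
  proof (intro ballI)
    fix x y assume x: "x \<in> G2" and y: "y \<in> G2"
    have "(x + y) ^ (q+1) = (x^q + y^q) * (x + y)" by (simp add: frob_add mult.commute)
    hence "f (x + y) - f x - f y - x ^ q * y = inverse 2 * (x * y ^ q - y * x ^ q)"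
      unfolding f_def divide_inverse pq1
      using id_half[of "inverse 2" "x^q" "y^q" x y] two0 by (simp add: frob_add)
    thus "f (x + y) - f x - f y - x ^ q * y \<in> G3"
      using V3(4)[OF inv2 Wpair[OF tok x y]] by (simp only:)
  qed
  moreover have "\<forall>d\<in>G0. \<forall>b\<in>G2. f (d ^ mm q n * b) - (d ^ mm q n) ^ (q+1) * f b \<in> G3"
  proof (intro ballI)
    fix d b
    have "f (d ^ mm q n * b) - (d ^ mm q n) ^ (q+1) * f b = 0"
      unfolding f_def by (simp only: power_mult_distrib times_divide_eq_right diff_self)
    thus "f (d ^ mm q n * b) - (d ^ mm q n) ^ (q+1) * f b \<in> G3" using V3(1) by simp
  qed
  ultimately show ?thesis by blast
qed


lemma char2_neg: "p = 2 \<Longrightarrow> - (x::'k) = x"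
  using char2_eq[of x] by (simp add: eq_neg_iff_add_eq_0)

lemma char2_two: "p = 2 \<Longrightarrow> (2::'k) = 0"
  using char2_eq[of 1] by (simp add: one_add_one)

lemma theta_ex: "p = 2 \<Longrightarrow> \<exists>th::'k. th \<in> Fq2 q \<and> th ^ q + th = 1"
proof -
  assume p2: "p = 2"
  obtain w :: 'k where w: "w \<in> Fq2 q" "w ^ q \<noteq> w" using w_ex by blast
  define t where "t = w ^ q + w"
  have t0: "t \<noteq> 0"
  proof
    assume "t = 0"
    hence "w ^ q = - w" unfolding t_def by (simp add: eq_neg_iff_add_eq_0)
    thus False using w(2) char2_neg[OF p2, of w] by simp
  qed
  have tq: "t ^ q = t" unfolding t_def frob_add Fq2_qq[OF w(1)] by (simp add: add.commute)
  define th where "th = w / t"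
  have "th ^ q + th = (w ^ q + w) / t" unfolding th_def power_divide tq by (simp add: add_divide_distrib)
  also have "\<dots> = 1" using t0 unfolding t_def by simp
  finally have "th ^ q + th = 1" .
  moreover have "th \<in> Fq2 q" unfolding th_def t_def using w(1)
    by (intro Fq2_div Fq2_add Fq2_pow)
  ultimately show ?thesis by blast
qed

definition PP :: "'k set \<Rightarrow> 'k set \<Rightarrow> ('k \<Rightarrow> 'k) \<Rightarrow> bool" where
  "PP G3 S f \<longleftrightarrow> (\<forall>b\<in>S. f b \<in> Fq2 q \<and> f b ^ q + f b = b ^ (q+1)) \<and>
     (\<forall>x\<in>S. \<forall>y\<in>S. f (x + y) - f x - f y - x ^ q * y \<in> G3)"

definition SS :: "'k set \<Rightarrow> 'k set \<Rightarrow> bool" where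
  "SS G2 S \<longleftrightarrow> S \<subseteq> G2 \<and> 0 \<in> S \<and> (\<forall>x\<in>S. \<forall>y\<in>S. x + y \<in> S)"

lemma id_c2:
  fixes F Fx Fy x y v vq xq T :: "'a::comm_ring_1"
  shows "(F + T*(vq*v) + vq*(x+y)) - f - (Fy + T*(vq*v) + vq*y) - f2 * (v + y)
    = (F - f - Fy - f2*y) + (x*vq - v*f2)"
  by (simp add: algebra_simps)

lemma id_c3:
  fixes F Fx Fy x y v vq xq T :: "'a::comm_ring_1"
  shows "(F + T*(vq*v) + vq*(x+y)) - (Fx + T*(vq*v) + vq*x) - Fy - (vq + xq) * y
    = F - Fx - Fy - xq*y"
  by (simp add: algebra_simps)

lemma id_c4:
  fixes F Fx Fy x y v vq xq T :: "'a::comm_ring_1"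
  shows "F - (Fx + T*(vq*v) + vq*x) - (Fy + T*(vq*v) + vq*y) - (vq + xq)*(v + y)
    = (F - Fx - Fy - xq*y) - vq*v - (x*vq - v*xq) - 2*(T*(vq*v) + vq*y + v*xq)"
  by (simp add: algebra_simps mult_2)

lemma id_tr:
  fixes Fx T x v vq xq Fxq Tq :: "'a::comm_ring_1"
  assumes "Fxq + Fx = xq * x" "Tq + T = 1"
  shows "(Fxq + Tq*(vq*v) + v*xq) + (Fx + T*(vq*v) + vq*x) = (vq + xq) * (v + x)"
proof -
  have "(Fxq + Tq*(vq*v) + v*xq) + (Fx + T*(vq*v) + vq*x) = (Fxq + Fx) + (Tq + T)*(vq*v) + v*xq + vq*x"
    by (simp add: algebra_simps)
  also have "\<dots> = (vq + xq) * (v + x)" using assms by (simp add: algebra_simps)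
  finally show ?thesis .
qed

lemma ext_step:
  fixes G0 G2 G3 S :: "'k set" and th v :: 'k and f :: "'k \<Rightarrow> 'k"
  assumes tok: "triple_ok p q n G0 G2 G3" and p2: "p = 2"
    and th: "th \<in> Fq2 q" "th ^ q + th = 1"
    and S: "SS G2 S" and P: "PP G3 S f" and v: "v \<in> G2" "v \<notin> S"
  shows "\<exists>f'. SS G2 (S \<union> (\<lambda>x. v + x) ` S) \<and> PP G3 (S \<union> (\<lambda>x. v + x) ` S) f' \<and>
     card S < card (S \<union> (\<lambda>x. v + x) ` S)"
proof -
  have vs3: "is_vs_over (gen_field ((\<lambda>x. x ^ (q^n + 1)) ` G0)) G3" and
       vs2: "is_vs_over (gen_field ((\<lambda>x. x ^ mm q n) ` G0)) G2" and
       W: "Wset p q G2 \<subseteq> G3" and G2F: "G2 \<subseteq> Fq2 q"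
    using tok unfolding triple_ok_def by auto
  note V2 = vs_facts[OF vs2] and V3 = vs_facts[OF vs3]
  have W': "\<And>b. b \<in> G2 \<Longrightarrow> b ^ (q+1) \<in> G3" using W p2 unfolding Wset_def by auto
  have SG: "S \<subseteq> G2" "0 \<in> S" "\<And>x y. x \<in> S \<Longrightarrow> y \<in> S \<Longrightarrow> x + y \<in> S" using S unfolding SS_def by auto
  have P1: "\<And>b. b \<in> S \<Longrightarrow> f b \<in> Fq2 q \<and> f b ^ q + f b = b ^ (q+1)"
    and P2: "\<And>x y. x \<in> S \<Longrightarrow> y \<in> S \<Longrightarrow> f (x + y) - f x - f y - x ^ q * y \<in> G3"
    using P unfolding PP_def by auto
  have vv: "\<And>z::'k. z + z = 0" using char2_eq[OF p2] .
  have vx: "\<And>x. v + x + v = x" using vv by (simp add: algebra_simps)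
  have vxS: "\<And>x. x \<in> S \<Longrightarrow> v + x \<notin> S"
  proof
    fix x assume "x \<in> S" "v + x \<in> S"
    hence "v + x + x \<in> S" using SG(3) by blast
    moreover have "v + x + x = v" using vv by (simp add: add.assoc)
    ultimately show False using v(2) by simp
  qed
  define S' where "S' = S \<union> (\<lambda>x. v + x) ` S"
  define f' where "f' = (\<lambda>w. if w \<in> S then f w else f (w + v) + th * (v^q * v) + v^q * (w + v))"
  have f'S: "\<And>x. x \<in> S \<Longrightarrow> f' x = f x" unfolding f'_def by simp
  have f'v: "f' (v + x) = f x + th * (v^q * v) + v^q * x" if xS: "x \<in> S" for x
  proof -
    have "f' (v + x) = f (v + x + v) + th * (v^q * v) + v^q * (v + x + v)"
      unfolding f'_def using vxS[OF xS] by simp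
    thus ?thesis by (simp only: vx)
  qed
  have vF: "v \<in> Fq2 q" using v G2F by blast
  have xF: "\<And>x. x \<in> S \<Longrightarrow> x \<in> Fq2 q" using SG(1) G2F by blast
  have "SS G2 S'" unfolding SS_def S'_def
  proof (intro conjI ballI)
    show "S \<union> (\<lambda>x. v + x) ` S \<subseteq> G2" using SG(1) v(1) V2(2) by blast
    show "0 \<in> S \<union> (\<lambda>x. v + x) ` S" using SG(2) by blast
    fix x y assume x: "x \<in> S \<union> (\<lambda>x. v + x) ` S" and y: "y \<in> S \<union> (\<lambda>x. v + x) ` S"
    show "x + y \<in> S \<union> (\<lambda>x. v + x) ` S"
    proof (cases "x \<in> S")
      case True
      show ?thesis
      proof (cases "y \<in> S")
        case True thus ?thesis using \<open>x \<in> S\<close> SG(3) by blast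
      next
        case False then obtain y0 where "y = v + y0" "y0 \<in> S" using y by blast
        hence "x + y = v + (x + y0)" "x + y0 \<in> S" using \<open>x \<in> S\<close> SG(3) by (auto simp: algebra_simps)
        thus ?thesis by blast
      qed
    next
      case False then obtain x0 where x0: "x = v + x0" "x0 \<in> S" using x by blast
      show ?thesis
      proof (cases "y \<in> S")
        case True
        hence "x + y = v + (x0 + y)" "x0 + y \<in> S" using x0 SG(3) by (auto simp: algebra_simps)
        thus ?thesis by blast
      next
        case False then obtain y0 where "y = v + y0" "y0 \<in> S" using y by blast
        hence "x + y = x0 + y0 + (v + v)" "x0 + y0 \<in> S" using x0 SG(3) by (auto simp: algebra_simps)
        thus ?thesis using vv by simp
      qed
    qed
  qed
  moreover have "PP G3 S' f'" unfolding PP_def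
  proof (rule conjI)
   show "\<forall>b\<in>S'. f' b \<in> Fq2 q \<and> f' b ^ q + f' b = b ^ (q+1)"
   proof
    fix b assume b: "b \<in> S'"
    show "f' b \<in> Fq2 q \<and> f' b ^ q + f' b = b ^ (q+1)"
    proof (cases "b \<in> S")
      case True thus ?thesis using P1 f'S by simp
    next
      case False then obtain x where x: "b = v + x" "x \<in> S" using b unfolding S'_def by blast
      have Fx: "f x \<in> Fq2 q" "f x ^ q + f x = x ^ q * x" using P1[OF x(2)] by (auto simp: pq1)
      have "f' b \<in> Fq2 q" unfolding x(1) f'v[OF x(2)] using Fx(1) th(1) vF xF[OF x(2)]
        by (intro Fq2_add Fq2_mult Fq2_pow)
      moreover have "(f x + th * (v^q * v) + v^q * x) ^ q = f x ^ q + th ^ q * (v^q * v) + v * x^q"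
        by (simp add: frob_add power_mult_distrib Fq2_qq[OF vF] mult.commute)
      hence "f' b ^ q + f' b = (v^q + x^q) * (v + x)"
        unfolding x(1) f'v[OF x(2)] using id_tr[where v=v and vq="v^q", OF Fx(2) th(2)] by simp
      hence "f' b ^ q + f' b = b ^ (q+1)" unfolding x(1) pq1 frob_add by simp
      ultimately show ?thesis by blast
    qed
   qed
  next
   show "\<forall>x\<in>S'. \<forall>y\<in>S'. f' (x + y) - f' x - f' y - x ^ q * y \<in> G3"
   proof (intro ballI)
    fix x y assume x: "x \<in> S'" and y: "y \<in> S'"
    show "f' (x + y) - f' x - f' y - x ^ q * y \<in> G3"
    proof (cases "x \<in> S")
      case xS: True
      show ?thesis
      proof (cases "y \<in> S")
        case True thus ?thesis using xS SG(3) f'S P2 by simp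
      next
        case False then obtain y0 where y0: "y = v + y0" "y0 \<in> S" using y unfolding S'_def by blast
        have e: "x + y = v + (x + y0)" unfolding y0 by (simp add: algebra_simps)
        have A: "f' (x + y) = f (x + y0) + th*(v^q*v) + v^q*(x+y0)"
          unfolding e using f'v[OF SG(3)[OF xS y0(2)]] .
        have B: "f' x = f x" using f'S[OF xS] .
        have C: "f' y = f y0 + th*(v^q*v) + v^q*y0" unfolding y0(1) using f'v[OF y0(2)] .
        have "f' (x + y) - f' x - f' y - x ^ q * y
          = (f (x + y0) - f x - f y0 - x^q*y0) + (x * v^q - v * x^q)"
          unfolding A B C unfolding y0(1) by (rule id_c2)
        thus ?thesis using V3(2) P2[OF xS y0(2)] Wpair[OF tok _ v(1)] xS SG(1) by auto
      qed
    next
      case False then obtain x0 where x0: "x = v + x0" "x0 \<in> S" using x unfolding S'_def by blast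
      show ?thesis
      proof (cases "y \<in> S")
        case yS: True
        have e: "x + y = v + (x0 + y)" unfolding x0 by (simp add: algebra_simps)
        have A: "f' (x + y) = f (x0 + y) + th*(v^q*v) + v^q*(x0+y)"
          unfolding e using f'v[OF SG(3)[OF x0(2) yS]] .
        have B: "f' x = f x0 + th*(v^q*v) + v^q*x0" unfolding x0(1) using f'v[OF x0(2)] .
        have C: "f' y = f y" using f'S[OF yS] .
        have D: "x ^ q * y = (v^q + x0^q) * y" unfolding x0(1) frob_add ..
        have "f' (x + y) - f' x - f' y - x ^ q * y = f (x0 + y) - f x0 - f y - x0^q*y"
          unfolding A B C D by (rule id_c3)
        thus ?thesis using P2[OF x0(2) yS] by simp
      next
        case False then obtain y0 where y0: "y = v + y0" "y0 \<in> S" using y unfolding S'_def by blast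
        have e: "x + y = x0 + y0" unfolding x0 y0 using vv by (simp add: algebra_simps)
        have A: "f' (x + y) = f (x0 + y0)" unfolding e using f'S[OF SG(3)[OF x0(2) y0(2)]] .
        have B: "f' x = f x0 + th*(v^q*v) + v^q*x0" unfolding x0(1) using f'v[OF x0(2)] .
        have C: "f' y = f y0 + th*(v^q*v) + v^q*y0" unfolding y0(1) using f'v[OF y0(2)] .
        have D: "x ^ q * y = (v^q + x0^q) * (v + y0)" unfolding x0(1) y0(1) frob_add ..
        have "f' (x + y) - f' x - f' y - x ^ q * y
          = (f (x0 + y0) - f x0 - f y0 - x0^q*y0) - v^q*v - (x0 * v^q - v * x0^q)
             - 2*(th*(v^q*v) + v^q*y0 + v*x0^q)"
          unfolding A B C D by (rule id_c4)
        also have "\<dots> = (f (x0 + y0) - f x0 - f y0 - x0^q*y0) - v^(q+1) - (x0 * v^q - v * x0^q)"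
          using char2_two[OF p2] by (simp add: pq1)
        finally show ?thesis using V3(5) P2[OF x0(2) y0(2)] W'[OF v(1)] Wpair[OF tok _ v(1)]
          x0(2) SG(1) by (metis subsetD)
      qed
    qed
   qed
  qed
  moreover have "card S < card S'"
  proof (rule psubset_card_mono)
    show "finite S'" by simp
    have "v \<in> S'" unfolding S'_def using SG(2) by force
    thus "S \<subset> S'" using v(2) unfolding S'_def by blast
  qed
  ultimately show ?thesis unfolding S'_def by blast
qed

lemma f0_ex:
  fixes G0 G2 G3 :: "'k set"
  assumes tok: "triple_ok p q n G0 G2 G3" and p2: "p = 2"
  shows "\<exists>f. PP G3 G2 f"
proof -
  obtain th :: 'k where th: "th \<in> Fq2 q" "th ^ q + th = 1" using theta_ex[OF p2] by blast
  have vs3: "is_vs_over (gen_field ((\<lambda>x. x ^ (q^n + 1)) ` G0)) G3" and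
       vs2: "is_vs_over (gen_field ((\<lambda>x. x ^ mm q n) ` G0)) G2"
    using tok unfolding triple_ok_def by auto
  have claim: "\<exists>S f. SS G2 S \<and> PP G3 S f \<and> (k \<le> card S \<or> S = G2)" for k
  proof (induction k)
    case 0
    have "SS G2 {0}" unfolding SS_def using vs_facts(1)[OF vs2] by auto
    moreover have "PP G3 {0} (\<lambda>_. 0)" unfolding PP_def using vs_facts(1)[OF vs3] q2 Fq2_0
      by (auto simp: frob_zero)
    ultimately show ?case by blast
  next
    case (Suc k)
    then obtain S f where Sf: "SS G2 S" "PP G3 S f" "k \<le> card S \<or> S = G2" by blast
    show ?case
    proof (cases "S = G2")
      case True thus ?thesis using Sf by blast
    next
      case False
      then obtain v where v: "v \<in> G2" "v \<notin> S" using Sf(1) unfolding SS_def by blast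
      from ext_step[OF tok p2 th Sf(1,2) v] obtain f' where
        "SS G2 (S \<union> (\<lambda>x. v + x) ` S)" "PP G3 (S \<union> (\<lambda>x. v + x) ` S) f'"
        "card S < card (S \<union> (\<lambda>x. v + x) ` S)" by blast
      thus ?thesis using Sf(3) False by (intro exI[of _ "S \<union> (\<lambda>x. v + x) ` S"] exI[of _ f']) auto
    qed
  qed
  obtain S f where Sf: "SS G2 S" "PP G3 S f" "Suc (card G2) \<le> card S \<or> S = G2"
    using claim[of "Suc (card G2)"] by blast
  have "card S \<le> card G2" using Sf(1) unfolding SS_def by (intro card_mono) auto
  hence "S = G2" using Sf(3) by simp
  thus ?thesis using Sf(2) by blast
qed

lemma f_two:
  fixes G0 G2 G3 :: "'k set"
  assumes tok: "triple_ok p q n G0 G2 G3" and p2: "p = 2"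
  shows "\<exists>f. (\<forall>b\<in>G2. f b \<in> Fq2 q \<and> f b ^ q + f b = b ^ (q+1)) \<and>
     (\<forall>x\<in>G2. \<forall>y\<in>G2. f (x + y) - f x - f y - x ^ q * y \<in> G3) \<and>
     (\<forall>d\<in>G0. \<forall>b\<in>G2. f (d ^ mm q n * b) - (d ^ mm q n) ^ (q+1) * f b \<in> G3)"
proof -
  obtain g :: 'k where g: "g ^ (mm q n * (q^2 - 1)) = 1" and G0: "G0 = range (\<lambda>k::nat. g ^ k)"
    using tok unfolding triple_ok_def by blast
  have vs3: "is_vs_over (gen_field ((\<lambda>x. x ^ (q^n + 1)) ` G0)) G3" and
       vs2: "is_vs_over (gen_field ((\<lambda>x. x ^ mm q n) ` G0)) G2" and
       G2F: "G2 \<subseteq> Fq2 q"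
    using tok unfolding triple_ok_def by auto
  define FA where "FA = gen_field ((\<lambda>x. x ^ mm q n) ` G0)"
  define FB where "FB = gen_field ((\<lambda>x. x ^ (q^n + 1)) ` G0)"
  note V2 = vs_facts[OF vs2, folded FA_def] and V3 = vs_facts[OF vs3, folded FB_def]
  obtain f0 where f0: "PP G3 G2 f0" using f0_ex[OF tok p2] by blast
  have f01: "\<And>b. b \<in> G2 \<Longrightarrow> f0 b \<in> Fq2 q \<and> f0 b ^ q + f0 b = b ^ (q+1)"
    and f02: "\<And>x y. x \<in> G2 \<Longrightarrow> y \<in> G2 \<Longrightarrow> f0 (x + y) - f0 x - f0 y - x ^ q * y \<in> G3"
    using f0 unfolding PP_def by auto
  define L where "L = q^2 - 1"
  define al where "al = g ^ mm q n"
  have q4: "q^2 \<ge> 4" using q2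
    by (metis power2_nat_le_eq_le power2_eq_square numeral_Bit0 numeral_One mult_2 one_add_one)
  have Lpos: "L > 0" unfolding L_def using q4 by simp
  have aL: "al ^ L = 1" unfolding al_def L_def using g by (simp add: power_mult)
  have a0: "al \<noteq> 0" using aL Lpos by (metis power_0_left less_not_refl zero_neq_one)
  have qL: "q^2 = Suc L" unfolding L_def using q4 by simp
  have aF: "al \<in> Fq2 q" unfolding Fq2_def qL using aL by simp
  define ia where "ia = inverse al"
  have iaF: "ia \<in> Fq2 q" unfolding ia_def using Fq2_inv[OF aF] .
  have iaa: "ia * al = 1" unfolding ia_def using a0 by simp
  define c where "c = (\<lambda>i::nat. ia ^ (i * (q+1)))"
  have cF: "c i \<in> Fq2 q" for i unfolding c_def using Fq2_pow[OF iaF] .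
  have cq: "c i ^ q = c i" for i
    unfolding c_def power_mult using Fq2_norm[OF Fq2_pow[OF iaF, of i]] .
  have ca: "c i * (al ^ i) ^ (q+1) = 1" for i
  proof -
    have "c i * (al ^ i) ^ (q+1) = ia ^ (i * (q+1)) * al ^ (i * (q+1))"
      unfolding c_def by (simp only: power_mult)
    also have "\<dots> = (ia * al) ^ (i * (q+1))" by (simp only: power_mult_distrib)
    finally show ?thesis using iaa by simp
  qed
  have gi: "g ^ i \<in> G0" for i using G0 by blast
  have ali: "al ^ i = (g ^ i) ^ mm q n" for i unfolding al_def by (simp add: power_mult[symmetric] mult.commute)
  have cFB: "c i \<in> FB" for i
  proof -
    have "(al ^ i) ^ (q+1) = ((g ^ i) ^ mm q n) ^ (q+1)" by (simp only: ali)
    also have "\<dots> = (g ^ i) ^ (mm q n * (q+1))" by (simp only: power_mult)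
    also have "\<dots> = (g ^ i) ^ (q^n + 1)" by (simp only: m_eq)
    finally have "(al ^ i) ^ (q+1) = (g ^ i) ^ (q^n + 1)" .
    moreover have "(g ^ i) ^ (q^n + 1) \<in> (\<lambda>x. x ^ (q^n + 1)) ` G0" using gi by (rule imageI)
    hence "(g ^ i) ^ (q^n + 1) \<in> FB" unfolding FB_def using gen_field_ge by (rule subsetD[rotated])
    ultimately have in1: "(al ^ i) ^ (q+1) \<in> FB" by simp
    have nz: "(al ^ i) ^ (q+1) \<noteq> 0" using a0 by simp
    have "inverse ((al ^ i) ^ (q+1)) \<in> FB" using gen_field_sub[of "(\<lambda>x. x ^ (q^n + 1)) ` G0"] in1 nz
      unfolding FB_def is_subfield_set_def by blast
    moreover have "inverse ((al ^ i) ^ (q+1)) = c i" using ca[of i] nz by (simp add: field_simps)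
    ultimately show ?thesis by simp
  qed
  have aiG2: "al ^ i * b \<in> G2" if "b \<in> G2" for i b
  proof -
    have "(g ^ i) ^ mm q n \<in> (\<lambda>x. x ^ mm q n) ` G0" using gi by (rule imageI)
    hence "al ^ i \<in> FA" unfolding ali FA_def using gen_field_ge by (rule subsetD[rotated])
    thus ?thesis using V2(4) that by blast
  qed
  have oddL: "(of_nat L :: 'k) = 1"
  proof -
    have "even q" using p2 e1 qdef by simp
    hence "even (q^2)" by simp
    hence "odd L" unfolding L_def using q4 q2 by (simp add: even_diff_nat)
    then obtain k where k: "L = 2 * k + 1" by (elim oddE)
    have "(of_nat L :: 'k) = 2 * of_nat k + 1" unfolding k by simp
    thus ?thesis using char2_two[OF p2] by simp
  qed
  define f where "f = (\<lambda>b. \<Sum>i<L. c i * f0 (al ^ i * b))"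
  have "\<forall>b\<in>G2. f b \<in> Fq2 q \<and> f b ^ q + f b = b ^ (q+1)"
  proof
    fix b assume b: "b \<in> G2"
    have fbF: "f b \<in> Fq2 q" unfolding f_def
      using cF f01[OF aiG2[OF b]] by (intro Fq2_sum Fq2_mult) auto
    have "f b ^ q + f b = (\<Sum>i<L. (c i * f0 (al ^ i * b)) ^ q + c i * f0 (al ^ i * b))"
      unfolding f_def frob_sum sum.distrib ..
    also have "\<dots> = (\<Sum>i<L. b ^ (q+1))"
    proof (rule sum.cong)
      fix i assume "i \<in> {..<L}"
      have "(c i * f0 (al ^ i * b)) ^ q + c i * f0 (al ^ i * b)
          = c i * (f0 (al ^ i * b) ^ q + f0 (al ^ i * b))"
        by (simp add: power_mult_distrib cq distrib_left)
      also have "\<dots> = c i * (al ^ i) ^ (q+1) * b ^ (q+1)" using f01[OF aiG2[OF b]]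
        by (simp add: power_mult_distrib mult.assoc)
      also have "\<dots> = b ^ (q+1)" using ca by simp
      finally show "(c i * f0 (al ^ i * b)) ^ q + c i * f0 (al ^ i * b) = b ^ (q+1)" .
    qed simp
    also have "\<dots> = b ^ (q+1)" using oddL by simp
    finally show "f b \<in> Fq2 q \<and> f b ^ q + f b = b ^ (q+1)" using fbF by blast
  qed
  moreover have "\<forall>x\<in>G2. \<forall>y\<in>G2. f (x + y) - f x - f y - x ^ q * y \<in> G3"
  proof (intro ballI)
    fix x y assume x: "x \<in> G2" and y: "y \<in> G2"
    define E where "E = (\<lambda>i. f0 (al ^ i * x + al ^ i * y) - f0 (al ^ i * x) - f0 (al ^ i * y)
        - (al ^ i * x) ^ q * (al ^ i * y))"
    have EG: "E i \<in> G3" for i unfolding E_def using f02[OF aiG2[OF x] aiG2[OF y]] .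
    have "f (x + y) - f x - f y = (\<Sum>i<L. c i * E i + x ^ q * y)"
      unfolding f_def sum_subtractf[symmetric]
    proof (rule sum.cong)
      fix i assume "i \<in> {..<L}"
      have "c i * ((al ^ i * x) ^ q * (al ^ i * y)) = (c i * (al ^ i) ^ (q+1)) * (x ^ q * y)"
        by (simp add: power_mult_distrib algebra_simps)
      also have "\<dots> = x ^ q * y" using ca by simp
      finally have e: "c i * ((al ^ i * x) ^ q * (al ^ i * y)) = x ^ q * y" .
      show "c i * f0 (al ^ i * (x + y)) - c i * f0 (al ^ i * x) - c i * f0 (al ^ i * y) =
            c i * E i + x ^ q * y"
        unfolding e[symmetric] E_def by (simp add: algebra_simps)
    qed simp
    also have "\<dots> = (\<Sum>i<L. c i * E i) + x ^ q * y" using oddL by (simp add: sum.distrib)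
    finally have "f (x + y) - f x - f y - x ^ q * y = (\<Sum>i<L. c i * E i)" by simp
    moreover have "(\<Sum>i<L. c i * E i) \<in> G3"
      by (rule vs_sum[OF vs3]) (use V3(4) cFB EG in \<open>unfold FB_def, blast\<close>)
    ultimately show "f (x + y) - f x - f y - x ^ q * y \<in> G3" by simp
  qed
  moreover have "\<forall>d\<in>G0. \<forall>b\<in>G2. f (d ^ mm q n * b) - (d ^ mm q n) ^ (q+1) * f b \<in> G3"
  proof -
    have step: "f (al * b) = al ^ (q+1) * f b" for b
    proof -
      define h where "h = (\<lambda>j. c j * f0 (al ^ j * b))"
      have "f (al * b) = (\<Sum>i<L. al ^ (q+1) * h (Suc i))"
        unfolding f_def
      proof (rule sum.cong)
        fix i assume "i \<in> {..<L}"
        have "c i = al ^ (q+1) * c (Suc i)"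
        proof -
          have ai1: "al * ia = 1" using iaa by (simp add: mult.commute)
          have "al ^ (q+1) * c (Suc i) = (al * ia) ^ (q+1) * c i"
            unfolding c_def by (simp add: power_mult_distrib power_add algebra_simps)
          also have "\<dots> = c i" unfolding ai1 by simp
          finally show ?thesis by (rule sym)
        qed
        moreover have "al ^ i * (al * b) = al ^ Suc i * b" by (simp add: algebra_simps)
        ultimately show "c i * f0 (al ^ i * (al * b)) = al ^ (q+1) * h (Suc i)"
          unfolding h_def by (simp only: mult.assoc)
      qed simp
      also have "\<dots> = al ^ (q+1) * (\<Sum>i<L. h (Suc i))" by (simp add: sum_distrib_left)
      also have "(\<Sum>i<L. h (Suc i)) = (\<Sum>i<L. h i)"
      proof -
        have hL: "h L = h 0"
        proof -
          have "ia ^ L = 1" unfolding ia_def using aL by (simp add: power_inverse)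
          hence "c L = 1" unfolding c_def by (simp only: power_mult power_one)
          thus ?thesis unfolding h_def using aL by (simp add: c_def)
        qed
        have "(\<Sum>i<Suc L. h i) = h 0 + (\<Sum>i<L. h (Suc i))" by (rule sum.lessThan_Suc_shift)
        moreover have "(\<Sum>i<Suc L. h i) = (\<Sum>i<L. h i) + h L" by simp
        ultimately show ?thesis using hL by simp
      qed
      finally show ?thesis unfolding f_def h_def .
    qed
    have iter: "f (al ^ k * b) = (al ^ k) ^ (q+1) * f b" for k b
    proof (induction k)
      case 0 thus ?case by simp
    next
      case (Suc k)
      have "f (al ^ Suc k * b) = f (al * (al ^ k * b))" by (simp add: mult.assoc)
      also have "\<dots> = al ^ (q+1) * ((al ^ k) ^ (q+1) * f b)" using step Suc by simp
      finally show ?case by (simp add: power_mult_distrib mult.assoc)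
    qed
    show ?thesis
    proof (intro ballI)
      fix d b assume "d \<in> G0" "b \<in> G2"
      then obtain k where "d = g ^ k" using G0 by blast
      hence "d ^ mm q n = al ^ k" using ali by simp
      thus "f (d ^ mm q n * b) - (d ^ mm q n) ^ (q+1) * f b \<in> G3" using iter V3(1) by simp
    qed
  qed
  ultimately show ?thesis by blast
qed

end

theorem theorem3p6:
  fixes p q n e :: nat
    and G :: "('k::{field,finite} \<times> 'k \<times> 'k \<times> 'k) set"
  assumes "prime p" and "e \<ge> 1" and "q = p ^ e" and "odd n"
    and "card (UNIV :: 'k set) = q ^ (2 * n)"
  shows "(subgroup G (Bgrp q n) \<longrightarrow>
           (\<exists>h \<in> carrier (Bgrp q n).
              triple_ok p q n (G0of (conjB q n h G)) (G2of (conjB q n h G)) (G3of (conjB q n h G))))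
       \<and> (\<forall>G0 G2 G3 :: 'k set. triple_ok p q n G0 G2 G3 \<longrightarrow>
           (\<exists>H. subgroup H (Bgrp q n) \<and> G0of H = G0 \<and> G2of H = G2 \<and> G3of H = G3))"
proof -
  have L: "S3 TYPE('k) p q n e" unfolding S3_def using assms by auto
  interpret BG: group "Bgrp q n :: ('k \<times> 'k \<times> 'k \<times> 'k) monoid" by (rule S3.Bgroup[OF L])
  show ?thesis
  proof (intro conjI impI allI)
    assume sg: "subgroup G (Bgrp q n)"
    have Gc: "G \<subseteq> carrier (Bgrp q n)" using sg subgroup.subset by blast
    have "conjB q n \<one>\<^bsub>Bgrp q n\<^esub> G = G"
    proof -
      have "conjB q n \<one>\<^bsub>Bgrp q n\<^esub> G = (\<lambda>g. g) ` G"
        unfolding conjB_def using Gc by (intro image_cong) auto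
      thus ?thesis by simp
    qed
    thus "\<exists>h \<in> carrier (Bgrp q n).
              triple_ok p q n (G0of (conjB q n h G)) (G2of (conjB q n h G)) (G3of (conjB q n h G))"
      using S3.forward[OF L sg] by (intro bexI[of _ "\<one>\<^bsub>Bgrp q n\<^esub>"]) auto
  next
    fix G0 G2 G3 :: "'k set"
    assume tok: "triple_ok p q n G0 G2 G3"
    obtain f where f: "\<forall>b\<in>G2. f b \<in> Fq2 q \<and> f b ^ q + f b = b ^ (q+1)"
      "\<forall>x\<in>G2. \<forall>y\<in>G2. f (x + y) - f x - f y - x ^ q * y \<in> G3"
      "\<forall>d\<in>G0. \<forall>b\<in>G2. f (d ^ mm q n * b) - (d ^ mm q n) ^ (q+1) * f b \<in> G3"
      using S3.f_two[OF L tok] S3.f_odd[OF L tok] by blast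
    show "\<exists>H. subgroup H (Bgrp q n) \<and> G0of H = G0 \<and> G2of H = G2 \<and> G3of H = G3"
      by (rule S3.converse_from_f[OF L tok]) (use f in auto)
  qed
qed

end
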